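(* Let $m\ge 1$ and $n\ge 0$ be integers. The multiplicity of $-n$ as an eigenvalue of ${\rm SR}(m,n)$ equals the number of permutations in the symmetric group ${\rm Sym}(m)$ with exactly $n$ inversions, that is, the coefficient of $t^n$ in $\prod_{i=2}^m (1+t+\cdots+t^{i-1})$.
   Context: ${\rm SR}(m,n)$ is the graph whose vertices are the vectors in $\{0,1,2,\dots\}^m$ with coordinate sum $n$, two vertices being adjacent when they differ in precisely two coordinate positions; eigenvalues are those of the adjacency matrix, and the multiplicity of a non-eigenvalue is $0$. An inversion of $\pi\in{\rm Sym}(m)$ is a pair $i<j$ with $\pi(i)>\pi(j)$. *)

theory Defs
  imports "Jordan_Normal_Form.Char_Poly" "HOL-Combinatorics.Permutations"
begin

text \<open>Vertices of SR(m,n): vectors in nat^m (as lists of length m) with coordinate sum n,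
  enumerated (without repetition) by the list below.\<close>

fun sr_vertex_list :: "nat \<Rightarrow> nat \<Rightarrow> nat list list" where
  "sr_vertex_list 0 n = (if n = 0 then [[]] else [])"
| "sr_vertex_list (Suc m) n =
     concat (map (\<lambda>k. map (Cons k) (sr_vertex_list m (n - k))) [0..<Suc n])"

definition sr_adj :: "nat \<Rightarrow> nat list \<Rightarrow> nat list \<Rightarrow> bool" where
  "sr_adj m u v \<longleftrightarrow> card {k. k < m \<and> u ! k \<noteq> v ! k} = 2"

definition sr_adj_matrix :: "nat \<Rightarrow> nat \<Rightarrow> real mat" where
  "sr_adj_matrix m n =
     (let vs = sr_vertex_list m n
      in mat (length vs) (length vs)
           (\<lambda>(i, j). if sr_adj m (vs ! i) (vs ! j) then 1 else 0))"

definition eig_mult :: "real mat \<Rightarrow> real \<Rightarrow> nat" where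
  "eig_mult A x = order x (char_poly A)"

definition inversions :: "nat \<Rightarrow> (nat \<Rightarrow> nat) \<Rightarrow> nat" where
  "inversions m p = card {(i, j). i < j \<and> j < m \<and> p i > p j}"

end

theory Submission
  imports Defs
begin


lemma set_vl: "set (sr_vertex_list m n) = {x. length x = m \<and> sum_list x = n}"
proof (induction m arbitrary: n)
  case 0 then show ?case by auto
next
  case (Suc m)
  have 1: "x \<in> set (sr_vertex_list (Suc m) n)" if x: "length x = Suc m" "sum_list x = n" for x
  proof -
    obtain k y where xy: "x = k # y" using x by (cases x) auto
    with x have "k \<le> n" "y \<in> set (sr_vertex_list m (n - k))" using Suc by auto
    then show ?thesis using xy by force
  qed
  have 2: "length x = Suc m \<and> sum_list x = n" if "x \<in> set (sr_vertex_list (Suc m) n)" for x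
    using that Suc by auto
  show ?case using 1 2 by blast
qed

lemma distinct_concat_map:
  assumes "distinct xs" "\<And>x. x \<in> set xs \<Longrightarrow> distinct (f x)"
    "\<And>x y. x \<in> set xs \<Longrightarrow> y \<in> set xs \<Longrightarrow> x \<noteq> y \<Longrightarrow> set (f x) \<inter> set (f y) = {}"
  shows "distinct (concat (map f xs))"
  using assms
proof (induction xs)
  case (Cons a xs)
  then show ?case by fastforce
qed simp

lemma distinct_vl: "distinct (sr_vertex_list m n)"
proof (induction m arbitrary: n)
  case 0 then show ?case by auto
next
  case (Suc m)
  show ?case unfolding sr_vertex_list.simps
    by (rule distinct_concat_map) (auto simp: Suc distinct_map inj_on_def)
qed




definition art :: "nat \<Rightarrow> nat \<Rightarrow> nat list set" where
  "art m n = {a. length a = m \<and> (\<forall>i<m. a!i \<le> m - 1 - i) \<and> sum_list a = n}"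

lemma art_sub: "art m n \<subseteq> set (sr_vertex_list m n)"
  unfolding art_def set_vl by auto

lemma finite_art: "finite (art m n)"
  using art_sub finite_subset by blast

lemma art_Suc: "art (Suc m) n = (\<Union>j\<in>{..min m n}. (#) j ` art m (n - j))"
proof (rule Set.set_eqI)
  fix x
  show "x \<in> art (Suc m) n \<longleftrightarrow> x \<in> (\<Union>j\<in>{..min m n}. (#) j ` art m (n - j))"
  proof
    assume x: "x \<in> art (Suc m) n"
    then obtain j y where xy: "x = j # y" unfolding art_def by (cases x) auto
    have "j \<le> m" using x xy unfolding art_def by force
    moreover have "j \<le> n" using x xy unfolding art_def by auto
    moreover have "y \<in> art m (n - j)"
    proof -
      have "y ! i \<le> m - 1 - i" if "i < m" for i
        using x xy that unfolding art_def by (auto dest!: spec[of _ "Suc i"])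
      then show ?thesis using x xy unfolding art_def by auto
    qed
    ultimately show "x \<in> (\<Union>j\<in>{..min m n}. (#) j ` art m (n - j))" using xy by auto
  next
    assume "x \<in> (\<Union>j\<in>{..min m n}. (#) j ` art m (n - j))"
    then obtain j y where xy: "x = j # y" "j \<le> m" "j \<le> n" "y \<in> art m (n - j)" by auto
    have "x ! i \<le> Suc m - 1 - i" if "i < Suc m" for i
      using xy that unfolding art_def by (cases i) auto
    then show "x \<in> art (Suc m) n" using xy unfolding art_def by auto
  qed
qed

lemma card_art_Suc: "card (art (Suc m) n) = (\<Sum>j\<le>min m n. card (art m (n - j)))"
  unfolding art_Suc
  by (subst card_UN_disjoint) (auto simp: finite_art card_image)

lemma art_0: "art 0 n = (if n = 0 then {[]} else {})"
  unfolding art_def by auto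

definition PP :: "nat \<Rightarrow> nat poly" where
  "PP m = (\<Prod>i\<in>{2..m}. \<Sum>j<i. monom (1::nat) j)"

lemma PP_Suc: "PP (Suc m) = (\<Sum>j<Suc m. monom 1 j) * PP m"
proof (cases m)
  case 0 then show ?thesis by (simp add: PP_def monom_0 one_pCons)
next
  case (Suc k)
  have "{2..Suc m} = insert (Suc m) {2..m}" using Suc by auto
  then show ?thesis unfolding PP_def by simp
qed

lemma coeff_PP: "coeff (PP m) n = card (art m n)"
proof (induction m arbitrary: n)
  case 0
  then show ?case by (simp add: PP_def art_0)
next
  case (Suc m)
  have "coeff (PP (Suc m)) n = (\<Sum>j<Suc m. if n < j then 0 else coeff (PP m) (n - j))"
    unfolding PP_Suc sum_distrib_right coeff_sum coeff_monom_mult by (auto intro!: sum.cong)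
  also have "\<dots> = (\<Sum>j\<le>min m n. coeff (PP m) (n - j))"
    by (rule sum.mono_neutral_cong_right) auto
  also have "\<dots> = card (art (Suc m) n)" unfolding card_art_Suc Suc ..
  finally show ?case .
qed




definition perms :: "nat \<Rightarrow> nat \<Rightarrow> (nat \<Rightarrow> nat) set" where
  "perms m n = {p. p permutes {..<m} \<and> inversions m p = n}"

definition dl :: "nat \<Rightarrow> (nat \<Rightarrow> nat) \<Rightarrow> nat \<Rightarrow> nat" where
  "dl m p = (\<lambda>i. if i < m then (if p 0 < p (Suc i) then p (Suc i) - 1 else p (Suc i)) else i)"

definition il :: "nat \<Rightarrow> nat \<Rightarrow> (nat \<Rightarrow> nat) \<Rightarrow> nat \<Rightarrow> nat" where
  "il m j q = (\<lambda>i. if i = 0 then j else if i \<le> m then (if j \<le> q (i - 1) then Suc (q (i - 1)) else q (i - 1)) else i)"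

lemma il_permutes:
  assumes q: "q permutes {..<m}" and j: "j \<le> m"
  shows "il m j q permutes {..<Suc m}"
proof (rule inj_imp_permutes)
  have qi: "q i < m" if "i < m" for i using q that permutes_in_image by fastforce
  have qinj: "q a = q b \<Longrightarrow> a = b" for a b using q permutes_inj injD by metis
  show "inj_on (il m j q) {..<Suc m}"
  proof (rule inj_onI)
    fix a b assume a: "a \<in> {..<Suc m}" and b: "b \<in> {..<Suc m}" and e: "il m j q a = il m j q b"
    show "a = b"
    proof (cases "a = 0"; cases "b = 0")
      assume "a = 0" "b \<noteq> 0" then show ?thesis using e b unfolding il_def by (auto split: if_splits)
    next
      assume "a \<noteq> 0" "b = 0" then show ?thesis using e a unfolding il_def by (auto split: if_splits)
    next
      assume "a \<noteq> 0" "b \<noteq> 0"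
      then have "q (a - 1) = q (b - 1)" using e a b unfolding il_def by (auto split: if_splits)
      then show ?thesis using qinj \<open>a \<noteq> 0\<close> \<open>b \<noteq> 0\<close> by fastforce
    qed simp
  qed
  show "il m j q x \<in> {..<Suc m}" if "x \<in> {..<Suc m}" for x
    using that j qi[of "x - 1"] unfolding il_def by auto
  show "il m j q x = x" if "x \<notin> {..<Suc m}" for x using that unfolding il_def by auto
qed simp

lemma dl_il:
  assumes q: "q permutes {..<m}"
  shows "dl m (il m j q) = q"
proof
  fix i
  show "dl m (il m j q) i = q i"
  proof (cases "i < m")
    case True then show ?thesis unfolding dl_def il_def by auto
  next
    case False then show ?thesis using q unfolding dl_def by (simp add: permutes_def)
  qed
qed

lemma il_0: "il m j q 0 = j" unfolding il_def by simp

lemma perm_0_le: assumes "p permutes {..<Suc m}" shows "p 0 \<le> m"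
  using assms permutes_in_image[of p "{..<Suc m}" 0] by auto

lemma il_dl:
  assumes p: "p permutes {..<Suc m}"
  shows "il m (p 0) (dl m p) = p"
proof
  fix i
  have pinj: "p a = p b \<Longrightarrow> a = b" for a b using p permutes_inj injD by metis
  show "il m (p 0) (dl m p) i = p i"
  proof (cases "i = 0")
    case True then show ?thesis unfolding il_def by simp
  next
    case False
    show ?thesis
    proof (cases "i \<le> m")
      case True
      obtain i' where i': "i = Suc i'" using False by (cases i) auto
      have "p i \<noteq> p 0" using pinj False by metis
      then show ?thesis using True unfolding il_def dl_def i' by auto
    next
      case False
      then show ?thesis using p \<open>i \<noteq> 0\<close> unfolding il_def by (simp add: permutes_def)
    qed
  qed
qed

lemma dl_permutes:
  assumes p: "p permutes {..<Suc m}"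
  shows "dl m p permutes {..<m}"
proof (rule inj_imp_permutes)
  have pinj: "p a = p b \<Longrightarrow> a = b" for a b using p permutes_inj injD by metis
  have pi: "p i < Suc m" if "i < Suc m" for i using p that permutes_in_image by fastforce
  have p0: "p 0 \<le> m" using perm_0_le[OF p] .
  show "inj_on (dl m p) {..<m}"
  proof (rule inj_onI)
    fix a b assume a: "a \<in> {..<m}" and b: "b \<in> {..<m}" and e: "dl m p a = dl m p b"
    have "p (Suc a) \<noteq> p 0" "p (Suc b) \<noteq> p 0" using pinj by blast+
    then have "p (Suc a) = p (Suc b)" using e a b unfolding dl_def by (auto split: if_splits)
    then show "a = b" using pinj by blast
  qed
  show "dl m p x \<in> {..<m}" if "x \<in> {..<m}" for x
  proof -
    have "p (Suc x) \<noteq> p 0" using pinj by blast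
    then show ?thesis using that p0 pi[of "Suc x"] unfolding dl_def by auto
  qed
  show "dl m p x = x" if "x \<notin> {..<m}" for x using that unfolding dl_def by auto
qed simp

lemma inversions_Suc:
  assumes p: "p permutes {..<Suc m}"
  shows "inversions (Suc m) p = p 0 + inversions m (dl m p)"
proof -
  have pinj: "p a = p b \<Longrightarrow> a = b" for a b using p permutes_inj injD by metis
  have pi: "p i < Suc m" if "i < Suc m" for i using p that permutes_in_image by fastforce
  have p0: "p 0 \<le> m" using perm_0_le[OF p] .
  let ?S = "{(i::nat, j::nat). i < j \<and> j < Suc m \<and> p i > p j}"
  let ?Sa = "{(i::nat, j). i = 0 \<and> 0 < j \<and> j < Suc m \<and> p 0 > p j}"
  let ?Sb = "{(i::nat, j::nat). 0 < i \<and> i < j \<and> j < Suc m \<and> p i > p j}"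
  let ?T = "{(i::nat, j::nat). i < j \<and> j < m \<and> dl m p i > dl m p j}"
  have sub0: "?Sa \<subseteq> {..<Suc m} \<times> {..<Suc m}" by auto
  have fin0: "finite ?Sa" by (rule finite_subset[OF sub0]) auto
  have sub1: "?Sb \<subseteq> {..<Suc m} \<times> {..<Suc m}" by auto
  have fin1: "finite ?Sb" by (rule finite_subset[OF sub1]) auto
  note fin = fin0 fin1
  have S: "?S = ?Sa \<union> ?Sb"
  proof (rule Set.set_eqI)
    fix x :: "nat \<times> nat"
    obtain a b where x: "x = (a, b)" by (cases x)
    show "x \<in> ?S \<longleftrightarrow> x \<in> ?Sa \<union> ?Sb" unfolding x by (cases "a = 0") auto
  qed
  have "card ?S = card ?Sa + card ?Sb" unfolding S by (rule card_Un_disjoint) (use fin in auto)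
  moreover have "card ?Sa = p 0"
  proof -
    have "?Sa = (\<lambda>j. (0, j)) ` {j. 0 < j \<and> j < Suc m \<and> p j < p 0}" by auto
    then have "card ?Sa = card {j. 0 < j \<and> j < Suc m \<and> p j < p 0}"
      by (simp add: card_image inj_on_def)
    also have "\<dots> = card (p ` {j. 0 < j \<and> j < Suc m \<and> p j < p 0})"
      by (rule card_image[symmetric], rule permutes_inj_on[OF p])
    also have "p ` {j. 0 < j \<and> j < Suc m \<and> p j < p 0} = {..<p 0}"
    proof (rule Set.set_eqI)
      fix v
      show "v \<in> p ` {j. 0 < j \<and> j < Suc m \<and> p j < p 0} \<longleftrightarrow> v \<in> {..<p 0}"
      proof
        assume "v \<in> {..<p 0}"
        then have "v \<in> {..<Suc m}" using p0 by auto
        then obtain j where j: "j \<in> {..<Suc m}" "p j = v"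
          using permutes_image[OF p] by (metis imageE)
        have "j \<noteq> 0"
        proof
          assume "j = 0" then show False using j \<open>v \<in> {..<p 0}\<close> by simp
        qed
        then have "j \<in> {j. 0 < j \<and> j < Suc m \<and> p j < p 0}" using j \<open>v \<in> {..<p 0}\<close> by auto
        then show "v \<in> p ` {j. 0 < j \<and> j < Suc m \<and> p j < p 0}" using j by blast
      qed auto
    qed
    finally show ?thesis by simp
  qed
  moreover have "card ?Sb = card ?T"
  proof -
    have mono: "p (Suc j) < p (Suc i) \<longleftrightarrow> dl m p j < dl m p i" if "i < m" "j < m" for i j
    proof -
      have "p (Suc i) \<noteq> p 0" "p (Suc j) \<noteq> p 0" using pinj by blast+
      then show ?thesis using that unfolding dl_def by auto
    qed
    have "?Sb = (\<lambda>(i, j). (Suc i, Suc j)) ` ?T"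
    proof (rule Set.set_eqI)
      fix x
      show "x \<in> ?Sb \<longleftrightarrow> x \<in> (\<lambda>(i, j). (Suc i, Suc j)) ` ?T"
      proof
        assume x: "x \<in> ?Sb"
        obtain a b where ab: "x = (a, b)" by (cases x)
        with x have "0 < a" "0 < b" by auto
        then obtain i j where ij: "x = (Suc i, Suc j)" using ab by (metis gr0_conv_Suc)
        then have "(i, j) \<in> ?T" using x mono[of i j] by auto
        then show "x \<in> (\<lambda>(i, j). (Suc i, Suc j)) ` ?T" using ij by force
      next
        assume "x \<in> (\<lambda>(i, j). (Suc i, Suc j)) ` ?T"
        then obtain i j where ij: "x = (Suc i, Suc j)" "(i, j) \<in> ?T" by auto
        then show "x \<in> ?Sb" using mono[of i j] by auto
      qed
    qed
    then show ?thesis by (simp add: card_image inj_on_def)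
  qed
  ultimately show ?thesis unfolding inversions_def by simp
qed

lemma finite_perms: "finite (perms m n)"
  unfolding perms_def
  by (rule finite_subset[OF _ finite_permutations[of "{..<m}"]]) auto

lemma card_perms_Suc: "card (perms (Suc m) n) = (\<Sum>j\<le>min m n. card (perms m (n - j)))"
proof -
  have "bij_betw (\<lambda>p. (p 0, dl m p)) (perms (Suc m) n) (SIGMA j:{..min m n}. perms m (n - j))"
  proof (rule bij_betw_byWitness[where f' = "\<lambda>(j, q). il m j q"])
    show "\<forall>a\<in>perms (Suc m) n. (\<lambda>(j, q). il m j q) (a 0, dl m a) = a"
      using il_dl unfolding perms_def by auto
    show "\<forall>a'\<in>SIGMA j:{..min m n}. perms m (n - j). (\<lambda>p. (p 0, dl m p)) ((\<lambda>(j, q). il m j q) a') = a'"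
      using dl_il il_0 unfolding perms_def by auto
    show "(\<lambda>p. (p 0, dl m p)) ` perms (Suc m) n \<subseteq> (SIGMA j:{..min m n}. perms m (n - j))"
    proof
      fix x assume "x \<in> (\<lambda>p. (p 0, dl m p)) ` perms (Suc m) n"
      then obtain p where p: "p permutes {..<Suc m}" "inversions (Suc m) p = n" "x = (p 0, dl m p)"
        unfolding perms_def by auto
      then show "x \<in> (SIGMA j:{..min m n}. perms m (n - j))"
        using inversions_Suc[OF p(1)] perm_0_le[OF p(1)] dl_permutes[OF p(1)]
        unfolding perms_def by auto
    qed
    show "(\<lambda>(j, q). il m j q) ` (SIGMA j:{..min m n}. perms m (n - j)) \<subseteq> perms (Suc m) n"
    proof
      fix x assume "x \<in> (\<lambda>(j, q). il m j q) ` (SIGMA j:{..min m n}. perms m (n - j))"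
      then obtain j q where jq: "j \<le> m" "j \<le> n" "q permutes {..<m}" "inversions m q = n - j"
        "x = il m j q" unfolding perms_def by auto
      have "x permutes {..<Suc m}" using il_permutes jq by simp
      moreover have "inversions (Suc m) x = n"
        using inversions_Suc[OF \<open>x permutes _\<close>] jq dl_il il_0 by simp
      ultimately show "x \<in> perms (Suc m) n" unfolding perms_def by simp
    qed
  qed
  then have "card (perms (Suc m) n) = card (SIGMA j:{..min m n}. perms m (n - j))"
    by (rule bij_betw_same_card)
  also have "\<dots> = (\<Sum>j\<le>min m n. card (perms m (n - j)))"
    by (rule card_SigmaI) (auto simp: finite_perms)
  finally show ?thesis .
qed

lemma perms_0: "card (perms 0 n) = (if n = 0 then 1 else 0)"
proof -
  have "perms 0 n = (if n = 0 then {id} else {})"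
    unfolding perms_def inversions_def by auto
  then show ?thesis by simp
qed

lemma card_perms_art: "card (perms m n) = card (art m n)"
proof (induction m arbitrary: n)
  case 0 then show ?case by (simp add: perms_0 art_0)
next
  case (Suc m) then show ?case by (simp add: card_perms_Suc card_art_Suc)
qed




definition pt :: "nat list \<Rightarrow> nat \<Rightarrow> nat \<Rightarrow> nat list" where
  "pt z s k = z[k := z ! k + s]"

definition kcons :: "nat \<Rightarrow> nat \<Rightarrow> (nat list \<Rightarrow> real) \<Rightarrow> bool" where
  "kcons m n f \<longleftrightarrow> (\<forall>z s. 1 \<le> s \<longrightarrow> s \<le> n \<longrightarrow> length z = m \<longrightarrow> sum_list z = n - s \<longrightarrow>
      (\<Sum>k<m. f (pt z s k)) = 0)"

definition Vs :: "nat \<Rightarrow> nat \<Rightarrow> nat list set" where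
  "Vs m n = {x. length x = m \<and> sum_list x = n}"

lemma finite_Vs: "finite (Vs m n)"
  unfolding Vs_def set_vl[symmetric] by simp

lemma sum_list_upd_add: "k < length (z::nat list) \<Longrightarrow> sum_list (z[k := z ! k + s]) = sum_list z + s"
proof (induction z arbitrary: k)
  case (Cons a z)
  then show ?case by (cases k) auto
qed simp

lemma sum_list_upd_sub: "k < length (z::nat list) \<Longrightarrow> s \<le> z ! k \<Longrightarrow> sum_list (z[k := z ! k - s]) = sum_list z - s"
proof (induction z arbitrary: k)
  case (Cons a z)
  then show ?case
  proof (cases k)
    case (Suc k')
    then have "z ! k' \<le> sum_list z" using Cons by (simp add: elem_le_sum_list)
    then show ?thesis using Cons Suc by auto
  qed auto
qed simp

lemma pt_length[simp]: "length (pt z s k) = length z" unfolding pt_def by simp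

lemma pt_nth: "k < length z \<Longrightarrow> pt z s k ! j = (if j = k then z ! k + s else z ! j)"
  unfolding pt_def by auto

lemma pt_sum: "k < length (z::nat list) \<Longrightarrow> sum_list (pt z s k) = sum_list z + s"
  unfolding pt_def by (rule sum_list_upd_add)

lemma list_le_sum_eq:
  assumes "length x = length y" "\<And>j. j < length x \<Longrightarrow> x ! j \<le> y ! j" "sum_list x = (sum_list y :: nat)"
  shows "x = y"
  using assms
proof (induction x y rule: list_induct2)
  case (Cons a x b y)
  have ab: "a \<le> b" using Cons.prems(1)[of 0] by simp
  have le: "\<And>j. j < length x \<Longrightarrow> x ! j \<le> y ! j" using Cons.prems(1)[of "Suc _"] by simp
  have "sum_list x \<le> sum_list y"
    unfolding sum_list_sum_nth using le Cons.hyps by (auto intro: sum_mono)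
  then have "a = b" "sum_list x = sum_list y" using ab Cons.prems(2) by auto
  then show ?case using Cons.IH le by simp
qed simp

fun mu :: "nat \<Rightarrow> nat list \<Rightarrow> nat" where
  "mu b [] = 0"
| "mu b (a # xs) = a + b * mu b xs"

lemma mu_less:
  assumes "length x = length y" "i < length x" "\<And>j. i < j \<Longrightarrow> j < length x \<Longrightarrow> x ! j = y ! j"
    "y ! i < x ! i" "\<And>j. j < length y \<Longrightarrow> y ! j \<le> n"
  shows "mu (Suc n) y < mu (Suc n) x"
  using assms
proof (induction i arbitrary: x y)
  case 0
  obtain a xs where x: "x = a # xs" using 0 by (cases x) auto
  obtain c ys where y: "y = c # ys" using 0 by (cases y) auto
  have "xs ! j = ys ! j" if "j < length xs" for j
    using 0(3)[of "Suc j"] that x y by simp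
  then have "xs = ys" using 0 x y by (intro nth_equalityI) auto
  then show ?case using 0 x y by simp
next
  case (Suc i)
  obtain a xs where x: "x = a # xs" using Suc by (cases x) auto
  obtain c ys where y: "y = c # ys" using Suc by (cases y) auto
  have e: "xs ! j = ys ! j" if "i < j" "j < length xs" for j
    using Suc.prems(3)[of "Suc j"] that x y by simp
  have le: "ys ! j \<le> n" if "j < length ys" for j
    using Suc.prems(5)[of "Suc j"] that y by simp
  have "mu (Suc n) ys < mu (Suc n) xs"
    by (rule Suc.IH) (use Suc.prems x y e le in \<open>auto\<close>)
  moreover have "c \<le> n" using Suc.prems(5)[of 0] y by simp
  ultimately have "c + Suc n * mu (Suc n) ys < Suc n * mu (Suc n) xs"
  proof -
    assume a1: "mu (Suc n) ys < mu (Suc n) xs" and a2: "c \<le> n"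
    have "Suc n * (mu (Suc n) ys + 1) \<le> Suc n * mu (Suc n) xs" using a1 by (intro mult_le_mono2) simp
    then show ?thesis using a2 by simp
  qed
  then show ?case using x y by simp
qed

definition U :: "nat \<Rightarrow> nat \<Rightarrow> nat list \<Rightarrow> nat \<Rightarrow> nat list set" where
  "U m n w i = {x \<in> Vs m n. (\<forall>j<m. w ! j \<le> x ! j) \<and> (\<forall>j<m. i < j \<longrightarrow> x ! j = w ! j)}"

lemma finite_U: "finite (U m n w i)"
  unfolding U_def using finite_Vs by simp

lemma newton:
  assumes f: "kcons m n f" and w: "length w = m" "sum_list w < n" and i: "m = Suc i"
  shows "(\<Sum>x\<in>U m n w i. f x) = 0"
proof -
  define r where "r = n - sum_list w"
  have r: "r > 0" using w r_def by simp
  let ?U = "U m n w i"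
  define W where "W s = {z \<in> Vs m (n - s). \<forall>j<m. w ! j \<le> z ! j}" for s
  have fW: "finite (W s)" for s unfolding W_def using finite_Vs by simp
  have diff: "(\<Sum>k<m. x ! k - w ! k) = r" if "x \<in> ?U" for x
  proof -
    have "(\<Sum>k<m. x ! k - w ! k) = (\<Sum>k<m. x ! k) - (\<Sum>k<m. w ! k)"
      by (rule sum_subtractf_nat) (use that in \<open>auto simp: U_def\<close>)
    also have "\<dots> = sum_list x - sum_list w"
      using that w unfolding U_def Vs_def by (simp add: sum_list_sum_nth atLeast0LessThan)
    finally show ?thesis using that unfolding r_def U_def Vs_def by simp
  qed
  have per_k: "(\<Sum>x\<in>?U. real (x ! k - w ! k) * f x) = (\<Sum>s\<in>{1..n}. \<Sum>z\<in>W s. f (pt z s k))"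
    if k: "k < m" for k
  proof -
    have "(\<Sum>x\<in>?U. real (x ! k - w ! k) * f x) = (\<Sum>x\<in>?U. \<Sum>s\<in>{1..x ! k - w ! k}. f x)"
      by simp
    also have "\<dots> = (\<Sum>(x, s)\<in>Sigma ?U (\<lambda>x. {1..x ! k - w ! k}). f x)"
      by (rule sum.Sigma) (auto simp: finite_U)
    also have "\<dots> = (\<Sum>(s, z)\<in>Sigma {1..n} W. f (pt z s k))"
    proof -
      let ?i = "\<lambda>(s, z). (pt z s k, s)"
      let ?j = "\<lambda>(x, s). (s, x[k := x ! k - s])"
      have T: "?j (?i a) = a \<and> ?i a \<in> Sigma ?U (\<lambda>x. {1..x ! k - w ! k})" if a: "a \<in> Sigma {1..n} W" for a
      proof -
        obtain s z where az: "a = (s, z)" by (cases a)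
        have z: "length z = m" "sum_list z = n - s" "\<And>j. j < m \<Longrightarrow> w ! j \<le> z ! j" "1 \<le> s" "s \<le> n"
          using a az unfolding W_def Vs_def by auto
        have 1: "?j (?i a) = a"
          using az z k by (simp add: pt_def)
        have ptn: "pt z s k ! j = (if j = k then z ! k + s else z ! j)" for j using pt_nth k z by simp
        have wk: "w ! k \<le> z ! k" using z k by simp
        have m1: "pt z s k \<in> Vs m n" using z k unfolding Vs_def by (simp add: pt_sum)
        have m2: "w ! j \<le> pt z s k ! j" if "j < m" for j
          using z(3)[OF that] ptn[of j] by (cases "j = k") auto
        have m4: "s \<in> {1..pt z s k ! k - w ! k}" using wk z ptn[of k] by simp
        have 2: "?i a \<in> Sigma ?U (\<lambda>x. {1..x ! k - w ! k})"
          using az m1 m2 m4 i unfolding U_def by auto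
        show ?thesis using 1 2 by simp
      qed
      have S: "?i (?j b) = b \<and> ?j b \<in> Sigma {1..n} W" if b: "b \<in> Sigma ?U (\<lambda>x. {1..x ! k - w ! k})" for b
      proof -
        obtain x s where bx: "b = (x, s)" by (cases b)
        have x: "length x = m" "sum_list x = n" "\<And>j. j < m \<Longrightarrow> w ! j \<le> x ! j" "1 \<le> s" "s \<le> x ! k - w ! k"
          using b bx unfolding U_def Vs_def by auto
        have wk: "w ! k \<le> x ! k" using x k by simp
        have "x ! k \<le> n" using x k elem_le_sum_list[of k x] by simp
        then have sn: "s \<le> n" using x wk by simp
        have 1: "?i (?j b) = b"
          using bx x k wk by (auto simp: pt_def)
        have le: "w ! j \<le> x[k := x ! k - s] ! j" if "j < m" for j
          using x(3)[OF that] x(5) wk x(1) k by (cases "j = k") (auto simp: nth_list_update)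
        have 2: "?j b \<in> Sigma {1..n} W"
          using bx x k wk sn le unfolding W_def Vs_def
          by (auto simp: sum_list_upd_sub)
        show ?thesis using 1 2 by simp
      qed
      show ?thesis
        by (rule sum.reindex_bij_witness[where i = ?i and j = ?j]) (use T S in auto)
    qed
    also have "\<dots> = (\<Sum>s\<in>{1..n}. \<Sum>z\<in>W s. f (pt z s k))"
      by (rule sum.Sigma[symmetric]) (auto simp: fW)
    finally show ?thesis .
  qed
  have "real r * (\<Sum>x\<in>?U. f x) = (\<Sum>x\<in>?U. real (\<Sum>k<m. x ! k - w ! k) * f x)"
    by (simp add: sum_distrib_left diff)
  also have "\<dots> = (\<Sum>k<m. \<Sum>x\<in>?U. real (x ! k - w ! k) * f x)"
    by (simp add: sum_distrib_right of_nat_sum) (rule sum.swap)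
  also have "\<dots> = (\<Sum>k<m. \<Sum>s\<in>{1..n}. \<Sum>z\<in>W s. f (pt z s k))"
    by (rule sum.cong) (auto simp: per_k)
  also have "\<dots> = (\<Sum>s\<in>{1..n}. \<Sum>z\<in>W s. \<Sum>k<m. f (pt z s k))"
    by (simp add: sum.swap[of _ "{..<m}"] sum.swap[of _ "{1..n}"])
  also have "\<dots> = 0"
  proof (rule sum.neutral, rule ballI, rule sum.neutral, rule ballI)
    fix s z assume "s \<in> {1..n}" "z \<in> W s"
    then show "(\<Sum>k<m. f (pt z s k)) = 0" using f unfolding kcons_def W_def Vs_def by auto
  qed
  finally show ?thesis using r by simp
qed


lemma U_split:
  assumes i: "Suc i < m" and w: "length w = m"
  shows "U m n w (Suc i) = U m n w i \<union> U m n (pt w 1 (Suc i)) (Suc i)"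
    "U m n w i \<inter> U m n (pt w 1 (Suc i)) (Suc i) = {}"
proof -
  have wn: "pt w 1 (Suc i) ! j = (if j = Suc i then w ! Suc i + 1 else w ! j)" for j
    using pt_nth[of "Suc i" w 1 j] i w by simp
  show "U m n w (Suc i) = U m n w i \<union> U m n (pt w 1 (Suc i)) (Suc i)"
  proof (rule Set.set_eqI)
    fix x
    show "x \<in> U m n w (Suc i) \<longleftrightarrow> x \<in> U m n w i \<union> U m n (pt w 1 (Suc i)) (Suc i)"
    proof
      assume x: "x \<in> U m n w (Suc i)"
      show "x \<in> U m n w i \<union> U m n (pt w 1 (Suc i)) (Suc i)"
      proof (cases "x ! Suc i = w ! Suc i")
        case True
        have "\<forall>j<m. i < j \<longrightarrow> x ! j = w ! j"
        proof (intro allI impI)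
          fix j assume "j < m" "i < j"
          then show "x ! j = w ! j" using x True unfolding U_def by (cases "j = Suc i") auto
        qed
        then show ?thesis using x unfolding U_def by auto
      next
        case False
        have "w ! Suc i \<le> x ! Suc i" using x i unfolding U_def by auto
        then have "\<forall>j<m. pt w 1 (Suc i) ! j \<le> x ! j" using x False unfolding U_def wn by auto
        moreover have "\<forall>j<m. Suc i < j \<longrightarrow> x ! j = pt w 1 (Suc i) ! j" using x unfolding U_def wn by auto
        ultimately show ?thesis using x unfolding U_def by auto
      qed
    next
      assume x: "x \<in> U m n w i \<union> U m n (pt w 1 (Suc i)) (Suc i)"
      then show "x \<in> U m n w (Suc i)"
      proof
        assume "x \<in> U m n w i" then show ?thesis unfolding U_def by auto
      next
        assume x: "x \<in> U m n (pt w 1 (Suc i)) (Suc i)"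
        have "\<forall>j<m. w ! j \<le> x ! j"
        proof (intro allI impI)
          fix j assume "j < m"
          then have "pt w 1 (Suc i) ! j \<le> x ! j" using x unfolding U_def by auto
          then show "w ! j \<le> x ! j" unfolding wn by (auto split: if_splits)
        qed
        moreover have "\<forall>j<m. Suc i < j \<longrightarrow> x ! j = w ! j" using x unfolding U_def wn by auto
        ultimately show ?thesis using x unfolding U_def by auto
      qed
    qed
  qed
  show "U m n w i \<inter> U m n (pt w 1 (Suc i)) (Suc i) = {}"
  proof (rule ccontr)
    assume "U m n w i \<inter> U m n (pt w 1 (Suc i)) (Suc i) \<noteq> {}"
    then obtain x where x: "x \<in> U m n w i" "x \<in> U m n (pt w 1 (Suc i)) (Suc i)" by blast
    have "x ! Suc i = w ! Suc i" using x(1) i unfolding U_def by auto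
    moreover have "pt w 1 (Suc i) ! Suc i \<le> x ! Suc i" using x(2) i unfolding U_def by auto
    ultimately show False unfolding wn by simp
  qed
qed

lemma D_lemma:
  assumes f: "kcons m n f"
  shows "i < m \<Longrightarrow> length w = m \<Longrightarrow> sum_list w + (m - i) \<le> n \<Longrightarrow> (\<Sum>x\<in>U m n w i. f x) = 0"
proof (induction "m - 1 - i" arbitrary: i w)
  case 0
  then have mi: "m = Suc i" by simp
  show ?case by (rule newton[OF f]) (use 0 mi in auto)
next
  case (Suc d)
  then have i: "Suc i < m" by simp
  have IH1: "(\<Sum>x\<in>U m n w (Suc i). f x) = 0"
    by (rule Suc.hyps) (use Suc.hyps(2) Suc.prems i in auto)
  have IH2: "(\<Sum>x\<in>U m n (pt w 1 (Suc i)) (Suc i). f x) = 0"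
    by (rule Suc.hyps) (use Suc.hyps(2) Suc.prems i in \<open>auto simp: pt_sum\<close>)
  have "(\<Sum>x\<in>U m n w (Suc i). f x) = (\<Sum>x\<in>U m n w i. f x) + (\<Sum>x\<in>U m n (pt w 1 (Suc i)) (Suc i). f x)"
    unfolding U_split(1)[OF i Suc.prems(2)]
    by (rule sum.union_disjoint[OF finite_U finite_U U_split(2)[OF i Suc.prems(2)]])
  then show ?case using IH1 IH2 by simp
qed

theorem K1:
  assumes f: "kcons m n f" and art: "\<And>a. a \<in> art m n \<Longrightarrow> f a = 0"
  shows "x \<in> Vs m n \<Longrightarrow> f x = 0"
proof (induction x rule: measure_induct_rule[where f = "mu (Suc n)"])
  case (less x)
  have x: "length x = m" "sum_list x = n" using less.prems unfolding Vs_def by auto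
  show ?case
  proof (cases "x \<in> art m n")
    case True then show ?thesis using art by simp
  next
    case False
    then obtain i where i: "i < m" "x ! i > m - 1 - i" using x unfolding art_def by auto
    define w where "w = x[i := x ! i - (m - i)]"
    have xi: "m - i \<le> x ! i" using i by simp
    have w: "length w = m" "sum_list w + (m - i) = n"
      using x i xi sum_list_upd_sub[of i x "m - i"] elem_le_sum_list[of i x] unfolding w_def by auto
    have wn: "w ! j = (if j = i then x ! i - (m - i) else x ! j)" for j
      using i x unfolding w_def by auto
    have xU: "x \<in> U m n w i" using less.prems unfolding U_def wn by auto
    have others: "f y = 0" if y: "y \<in> U m n w i - {x}" for y
    proof -
      have yV: "y \<in> Vs m n" and yw: "\<And>j. j < m \<Longrightarrow> w ! j \<le> y ! j"
        and ya: "\<And>j. j < m \<Longrightarrow> i < j \<Longrightarrow> y ! j = w ! j" and yx: "y \<noteq> x"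
        using y unfolding U_def by auto
      have ylen: "length y = m" and ysum: "sum_list y = n" using yV unfolding Vs_def by auto
      have lt: "y ! i < x ! i"
      proof (rule ccontr)
        assume "\<not> y ! i < x ! i"
        then have le: "x ! j \<le> y ! j" if "j < length x" for j
          using that yw[of j] ya[of j] x wn[of j] by (cases "j < i"; cases "j = i") auto
        have "x = y" by (rule list_le_sum_eq[OF _ le]) (use x ylen ysum in auto)
        then show False using yx by simp
      qed
      have "mu (Suc n) y < mu (Suc n) x"
      proof (rule mu_less[where i = i])
        show "length x = length y" using x ylen by simp
        show "i < length x" using x i by simp
        show "x ! j = y ! j" if "i < j" "j < length x" for j using ya[of j] that x wn[of j] by auto
        show "y ! i < x ! i" by (rule lt)
        show "y ! j \<le> n" if "j < length y" for j using elem_le_sum_list[OF that] ysum by simp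
      qed
      then show ?thesis using less.IH yV by simp
    qed
    have "0 = (\<Sum>y\<in>U m n w i. f y)"
      by (rule D_lemma[OF f, symmetric]) (use i w in auto)
    also have "\<dots> = f x + (\<Sum>y\<in>U m n w i - {x}. f y)"
      by (rule sum.remove) (auto simp: finite_U xU)
    also have "(\<Sum>y\<in>U m n w i - {x}. f y) = 0" using others by simp
    finally show ?thesis by simp
  qed
qed




definition Cg :: "nat \<Rightarrow> nat list \<Rightarrow> nat list \<Rightarrow> (nat \<Rightarrow> nat) \<Rightarrow> bool" where
  "Cg m a x \<sigma> \<longleftrightarrow> (\<forall>j<m. x ! j + (m - 1 - j) = a ! j + (m - 1 - \<sigma> j))"

definition gvec :: "nat \<Rightarrow> nat list \<Rightarrow> nat list \<Rightarrow> real" where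
  "gvec m a x = (\<Sum>\<sigma>\<in>{\<sigma>. \<sigma> permutes {..<m}}. if Cg m a x \<sigma> then of_int (sign \<sigma>) else 0)"

lemma perm_lt: "\<sigma> permutes {..<m} \<Longrightarrow> j < m \<Longrightarrow> \<sigma> j < m"
  using permutes_in_image by fastforce

lemma gvec_self: "gvec m a a = 1"
proof -
  have C: "Cg m a a \<sigma> \<longleftrightarrow> \<sigma> = id" if s: "\<sigma> permutes {..<m}" for \<sigma>
  proof
    assume c: "Cg m a a \<sigma>"
    have "\<sigma> j = j" for j
    proof (cases "j < m")
      case True
      then have "m - 1 - j = m - 1 - \<sigma> j" using c unfolding Cg_def by auto
      then show ?thesis using True perm_lt[OF s True] by linarith
    next
      case False then show ?thesis using s unfolding permutes_def by auto
    qed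
    then show "\<sigma> = id" by auto
  qed (simp add: Cg_def)
  have "gvec m a a = (\<Sum>\<sigma>\<in>{\<sigma>. \<sigma> permutes {..<m}}. if \<sigma> = id then 1 else 0)"
    unfolding gvec_def by (rule sum.cong) (auto simp: C)
  also have "\<dots> = 1" by (simp add: sum.delta finite_permutations permutes_id)
  finally show ?thesis .
qed

lemma gvec_tri:
  assumes a: "a \<in> Vs m n" and b: "length b = m" and g: "gvec m a b \<noteq> 0"
  shows "b = a \<or> mu (Suc n) a < mu (Suc n) b"
proof -
  obtain \<sigma> where s: "\<sigma> permutes {..<m}" and c: "Cg m a b \<sigma>"
  proof -
    from g obtain \<sigma> where s1: "\<sigma> \<in> {\<sigma>. \<sigma> permutes {..<m}}" and s2: "(if Cg m a b \<sigma> then real_of_int (sign \<sigma>) else 0) \<noteq> 0"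
      unfolding gvec_def by (rule sum.not_neutral_contains_not_neutral)
    have "Cg m a b \<sigma>" using s2 by (cases "Cg m a b \<sigma>") auto
    then show ?thesis using that s1 by blast
  qed
  have alen: "length a = m" and asum: "sum_list a = n" using a unfolding Vs_def by auto
  have eq: "b ! j + (m - 1 - j) = a ! j + (m - 1 - \<sigma> j)" if "j < m" for j
    using c that unfolding Cg_def by auto
  show ?thesis
  proof (cases "\<forall>j<m. \<sigma> j = j")
    case True
    then have "b ! j = a ! j" if "j < m" for j using eq[OF that] that by simp
    then have "b = a" using alen b by (intro nth_equalityI) auto
    then show ?thesis by simp
  next
    case False
    define D where "D = {j. j < m \<and> \<sigma> j \<noteq> j}"
    have D: "finite D" "D \<noteq> {}" using False unfolding D_def by auto
    define i where "i = Max D"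
    have iD: "i \<in> D" unfolding i_def using D by (rule Max_in)
    have above: "\<sigma> j = j" if "i < j" "j < m" for j
    proof (rule ccontr)
      assume "\<sigma> j \<noteq> j"
      then have "j \<in> D" using that unfolding D_def by auto
      then have "j \<le> i" unfolding i_def using D by simp
      then show False using that by simp
    qed
    have im: "i < m" and si: "\<sigma> i \<noteq> i" using iD unfolding D_def by auto
    have "\<sigma> i < i"
    proof (rule ccontr)
      assume "\<not> \<sigma> i < i"
      then have gt: "i < \<sigma> i" using si by simp
      have "\<sigma> (\<sigma> i) = \<sigma> i" by (rule above[OF gt perm_lt[OF s im]])
      then have "\<sigma> i = i" using injD[OF permutes_inj[OF s]] by blast
      then show False using si by simp
    qed
    then have lt: "a ! i < b ! i" using eq[OF im] im by simp
    have "mu (Suc n) a < mu (Suc n) b"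
    proof (rule mu_less[where i = i])
      show "length b = length a" using alen b by simp
      show "i < length b" using b im by simp
      show "b ! j = a ! j" if "i < j" "j < length b" for j
        using eq[of j] above[of j] that b by simp
      show "a ! i < b ! i" by (rule lt)
      show "a ! j \<le> n" if "j < length a" for j using elem_le_sum_list[OF that] asum by simp
    qed
    then show ?thesis by simp
  qed
qed


lemma step_inv:
  assumes s: "\<sigma> permutes {..<m}" and k: "k < m" and a: "length a = m" "\<And>j. j < m \<Longrightarrow> a ! j \<le> m - 1 - j"
    and z: "length z = m" and s1: "1 \<le> s" and c: "Cg m a (pt z s k) \<sigma>"
  defines "l \<equiv> inv_into UNIV \<sigma> (\<sigma> k + s)"
  shows "l < m" "l \<noteq> k" "\<sigma> \<circ> Transposition.transpose k l permutes {..<m}"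
    "Cg m a (pt z s l) (\<sigma> \<circ> Transposition.transpose k l)"
    "inv_into UNIV (\<sigma> \<circ> Transposition.transpose k l) ((\<sigma> \<circ> Transposition.transpose k l) l + s) = k"
    "(\<sigma> \<circ> Transposition.transpose k l) \<circ> Transposition.transpose l k = \<sigma>"
    "sign (\<sigma> \<circ> Transposition.transpose k l) = - sign \<sigma>"
proof -
  have ptn: "pt z s q ! j = (if j = q then z ! q + s else z ! j)" if "q < m" for q j
    using pt_nth[of q z s j] that z by simp
  have eq: "pt z s k ! j + (m - 1 - j) = a ! j + (m - 1 - \<sigma> j)" if "j < m" for j
    using c that unfolding Cg_def by auto
  have sk: "\<sigma> k < m" using perm_lt[OF s k] .
  have ek: "z ! k + s + (m - 1 - k) = a ! k + (m - 1 - \<sigma> k)" using eq[OF k] ptn[OF k, of k] by simp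
  have t: "\<sigma> k + s < m" using ek a(2)[OF k] sk k by linarith
  have inv: "inv_into UNIV \<sigma> permutes {..<m}" using permutes_inv[OF s] .
  show lm: "l < m" unfolding l_def using perm_lt[OF inv t] .
  have sl: "\<sigma> l = \<sigma> k + s" unfolding l_def using permutes_inverses(1)[OF s] by simp
  show lk: "l \<noteq> k" using sl s1 by auto
  let ?t = "\<sigma> \<circ> Transposition.transpose k l"
  show tp: "?t permutes {..<m}"
    by (rule permutes_compose[OF permutes_swap_id s]) (use k lm in auto)
  have tk: "?t k = \<sigma> k + s" using sl by simp
  have tl: "?t l = \<sigma> k" by simp
  have to: "?t j = \<sigma> j" if "j \<noteq> k" "j \<noteq> l" for j using that by simp
  show "Cg m a (pt z s l) ?t"
    unfolding Cg_def
  proof (intro allI impI)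
    fix j assume j: "j < m"
    show "pt z s l ! j + (m - 1 - j) = a ! j + (m - 1 - ?t j)"
    proof (cases "j = k")
      case True
      then show ?thesis using ek tk t lk ptn[OF lm, of k] by simp
    next
      case False
      note jk = False
      show ?thesis
      proof (cases "j = l")
        case True
        have "z ! l + (m - 1 - l) = a ! l + (m - 1 - \<sigma> l)" using eq[OF lm] ptn[OF k, of l] lk by simp
        then show ?thesis using True tl sl t ptn[OF lm, of l] by simp
      next
        case False
        then show ?thesis using eq[OF j] ptn[OF k, of j] ptn[OF lm, of j] jk to[OF jk False] by simp
      qed
    qed
  qed
  have "?t l + s = ?t k" using tl tk by simp
  then show "inv_into UNIV ?t (?t l + s) = k" using permutes_inverses(2)[OF tp, of k] by simp
  show "?t \<circ> Transposition.transpose l k = \<sigma>"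
    by (simp add: comp_assoc transpose_commute[of l k])
  have "sign ?t = sign \<sigma> * sign (Transposition.transpose k l)"
    by (rule sign_compose) (auto intro: permutes_imp_permutation[OF _ s] permutation_swap_id)
  then show "sign ?t = - sign \<sigma>" using lk by (simp add: sign_swap_id)
qed

lemma gvec_cons:
  assumes a: "a \<in> art m n"
  shows "kcons m n (gvec m a)"
  unfolding kcons_def
proof (intro allI impI)
  fix z s assume s1: "1 \<le> s" and sn: "s \<le> n" and z: "length z = m" and zs: "sum_list z = n - s"
  have alen: "length a = m" and ab: "\<And>j. j < m \<Longrightarrow> a ! j \<le> m - 1 - j" using a unfolding art_def by auto
  let ?P = "{\<sigma>. \<sigma> permutes {..<m}}"
  let ?S = "{p \<in> {..<m} \<times> ?P. Cg m a (pt z s (fst p)) (snd p)}"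
  define \<phi> :: "nat \<times> (nat \<Rightarrow> nat) \<Rightarrow> nat \<times> (nat \<Rightarrow> nat)" where "\<phi> p = (let k = fst p; \<sigma> = snd p; l = inv_into UNIV \<sigma> (\<sigma> k + s) in (l, \<sigma> \<circ> Transposition.transpose k l))" for p
  have finP: "finite ?P" by (rule finite_permutations) simp
  have finS: "finite ?S" using finP by simp
  have phi: "\<phi> p \<in> ?S \<and> \<phi> (\<phi> p) = p \<and> sign (snd (\<phi> p)) = - sign (snd p)" if p: "p \<in> ?S" for p
  proof -
    obtain k \<sigma> where p': "p = (k, \<sigma>)" by (cases p)
    have k: "k < m" and s: "\<sigma> permutes {..<m}" and c: "Cg m a (pt z s k) \<sigma>" using p p' by auto
    note st = step_inv[OF s k alen ab z s1 c]
    define l where "l = inv_into UNIV \<sigma> (\<sigma> k + s)"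
    have ph: "\<phi> p = (l, \<sigma> \<circ> Transposition.transpose k l)" unfolding \<phi>_def p' l_def Let_def by simp
    have ph2: "\<phi> (l, \<sigma> \<circ> Transposition.transpose k l) = (k, (\<sigma> \<circ> Transposition.transpose k l) \<circ> Transposition.transpose l k)"
      unfolding \<phi>_def Let_def fst_conv snd_conv using st(5) unfolding l_def by simp
    have "\<phi> (\<phi> p) = (k, (\<sigma> \<circ> Transposition.transpose k l) \<circ> Transposition.transpose l k)"
      unfolding ph by (rule ph2)
    also have "\<dots> = p" using st(6) unfolding l_def p' by simp
    finally have 2: "\<phi> (\<phi> p) = p" .
    have 1: "\<phi> p \<in> ?S" unfolding ph using st(1,3,4) unfolding l_def by simp
    have 3: "sign (snd (\<phi> p)) = - sign (snd p)" unfolding ph using st(7) p' unfolding l_def by simp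
    show ?thesis using 1 2 3 by simp
  qed
  let ?h = "\<lambda>p. real_of_int (sign (snd p))"
  have "(\<Sum>k<m. gvec m a (pt z s k)) = (\<Sum>k<m. \<Sum>\<sigma>\<in>?P. if Cg m a (pt z s k) \<sigma> then real_of_int (sign \<sigma>) else 0)"
    unfolding gvec_def ..
  also have "\<dots> = (\<Sum>p\<in>{..<m} \<times> ?P. if Cg m a (pt z s (fst p)) (snd p) then ?h p else 0)"
    by (subst sum.cartesian_product) (simp add: case_prod_beta)
  also have "\<dots> = (\<Sum>p\<in>?S. ?h p)"
    by (rule sum.inter_filter[symmetric]) (use finP in simp)
  finally have E: "(\<Sum>k<m. gvec m a (pt z s k)) = (\<Sum>p\<in>?S. ?h p)" .
  have "(\<Sum>p\<in>?S. ?h p) = (\<Sum>p\<in>?S. ?h (\<phi> p))"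
    by (rule sum.reindex_bij_witness[where i = \<phi> and j = \<phi>]) (use phi in auto)
  also have "\<dots> = - (\<Sum>p\<in>?S. ?h p)"
    by (simp add: sum_negf[symmetric] phi)
  finally have "(\<Sum>p\<in>?S. ?h p) = 0" by simp
  then show "(\<Sum>k<m. gvec m a (pt z s k)) = 0" using E by simp
qed




lemma sum_split_at:
  fixes k N :: nat
  assumes "k \<le> N"
  shows "(\<Sum>t\<in>{0..<N}. f t) = (\<Sum>t<k. f t) + (\<Sum>r<N - k. f (k + r))"
proof -
  have 1: "(\<Sum>t\<in>{0..<N}. f t) = (\<Sum>t\<in>{0..<k}. f t) + (\<Sum>t\<in>{k..<N}. f t)"
    using sum.atLeastLessThan_concat[of 0 k N f] assms by simp
  have 2: "(\<Sum>t\<in>{k..<N}. f t) = (\<Sum>r<N - k. f (k + r))"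
    using sum.shift_bounds_nat_ivl[of f 0 k "N - k"] assms by (simp add: atLeast0LessThan add.commute)
  show ?thesis using 1 2 by (simp add: atLeast0LessThan)
qed

lemma self_scalar_zero:
  fixes x :: "real vec"
  assumes x: "x \<in> carrier_vec n" and z: "x \<bullet> x = 0"
  shows "x = 0\<^sub>v n"
proof -
  have "(\<Sum>i\<in>{0..<n}. x $ i * x $ i) = 0" using z x unfolding scalar_prod_def by simp
  then have "\<forall>i\<in>{0..<n}. x $ i * x $ i = 0" by (subst (asm) sum_nonneg_eq_0_iff) auto
  then show ?thesis using x by (intro eq_vecI) auto
qed

locale algsetup =
  fixes A :: "real mat" and c :: real and N :: nat and J :: "nat set"
    and gv :: "nat \<Rightarrow> real vec" and \<mu> :: "nat \<Rightarrow> nat"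
  assumes A: "A \<in> carrier_mat N N"
  and sym: "transpose_mat (A + c \<cdot>\<^sub>m 1\<^sub>m N) = A + c \<cdot>\<^sub>m 1\<^sub>m N"
  and J: "J \<subseteq> {..<N}"
  and gv: "\<And>j. j \<in> J \<Longrightarrow> gv j \<in> carrier_vec N"
  and gvker: "\<And>j. j \<in> J \<Longrightarrow> (A + c \<cdot>\<^sub>m 1\<^sub>m N) *\<^sub>v gv j = 0\<^sub>v N"
  and gdiag: "\<And>j. j \<in> J \<Longrightarrow> gv j $ j = 1"
  and gtri: "\<And>j j'. j \<in> J \<Longrightarrow> j' \<in> J \<Longrightarrow> gv j $ j' \<noteq> 0 \<Longrightarrow> j' = j \<or> \<mu> j < \<mu> j'"
  and ub: "\<And>w. w \<in> carrier_vec N \<Longrightarrow> (A + c \<cdot>\<^sub>m 1\<^sub>m N) *\<^sub>v w = 0\<^sub>v N \<Longrightarrow> (\<forall>j\<in>J. w $ j = 0) \<Longrightarrow> w = 0\<^sub>v N"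
begin

definition "k = card J"
definition "js = sorted_list_of_set J"
definition "os = sorted_list_of_set ({..<N} - J)"
definition "B = A + c \<cdot>\<^sub>m 1\<^sub>m N"
definition "P = mat N N (\<lambda>(i, t). if t < k then gv (js ! t) $ i else (if i = os ! (t - k) then 1 else 0))"

lemma finJ: "finite J" using J finite_subset by blast

lemma kN: "k \<le> N" unfolding k_def using card_mono[OF _ J] by simp

lemma js: "length js = k" "distinct js" "set js = J"
  unfolding js_def k_def using finJ by auto

lemma os: "length os = N - k" "distinct os" "set os = {..<N} - J"
  unfolding os_def k_def using finJ J by (auto simp: card_Diff_subset)

lemma js_in: "t < k \<Longrightarrow> js ! t \<in> J" using js nth_mem by metis

lemma os_in: "r < N - k \<Longrightarrow> os ! r \<in> {..<N} - J" using os nth_mem by metis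

lemma Bc: "B \<in> carrier_mat N N" unfolding B_def using A by simp

lemma Pc: "P \<in> carrier_mat N N" unfolding P_def by simp

lemma Pv:
  assumes w: "w \<in> carrier_vec N" and i: "i < N"
  shows "(P *\<^sub>v w) $ i = (\<Sum>t<k. gv (js ! t) $ i * w $ t) + (\<Sum>r<N - k. if i = os ! r then w $ (k + r) else 0)"
proof -
  have "(P *\<^sub>v w) $ i = (\<Sum>t\<in>{0..<N}. P $$ (i, t) * w $ t)"
    using w i Pc by (simp add: scalar_prod_def row_def)
  also have "\<dots> = (\<Sum>t<k. P $$ (i, t) * w $ t) + (\<Sum>r<N - k. P $$ (i, k + r) * w $ (k + r))"
    by (rule sum_split_at[OF kN])
  also have "(\<Sum>t<k. P $$ (i, t) * w $ t) = (\<Sum>t<k. gv (js ! t) $ i * w $ t)"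
    by (rule sum.cong) (use i kN in \<open>auto simp: P_def\<close>)
  also have "(\<Sum>r<N - k. P $$ (i, k + r) * w $ (k + r)) = (\<Sum>r<N - k. if i = os ! r then w $ (k + r) else 0)"
    by (rule sum.cong) (use i kN in \<open>auto simp: P_def\<close>)
  finally show ?thesis .
qed

lemma PvJ:
  assumes w: "w \<in> carrier_vec N" and i: "i \<in> J"
  shows "(P *\<^sub>v w) $ i = (\<Sum>t<k. gv (js ! t) $ i * w $ t)"
proof -
  have iN: "i < N" using i J by auto
  have "(\<Sum>r<N - k. if i = os ! r then w $ (k + r) else 0) = 0"
    by (rule sum.neutral) (use os_in i in auto)
  then show ?thesis using Pv[OF w iN] by simp
qed

lemma PvO:
  assumes w: "w \<in> carrier_vec N" and r: "r < N - k"
  shows "(P *\<^sub>v w) $ (os ! r) = (\<Sum>t<k. gv (js ! t) $ (os ! r) * w $ t) + w $ (k + r)"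
proof -
  have iN: "os ! r < N" using os_in[OF r] by auto
  have "(\<Sum>r'<N - k. if os ! r = os ! r' then w $ (k + r') else 0) = (\<Sum>r'<N - k. if r' = r then w $ (k + r') else 0)"
    by (rule sum.cong) (use os r nth_eq_iff_index_eq[OF os(2), of r] in auto)
  also have "\<dots> = w $ (k + r)" using r by simp
  finally show ?thesis using Pv[OF w iN] by simp
qed


lemma smult_one_mat_vec:
  assumes v: "v \<in> carrier_vec N"
  shows "(c \<cdot>\<^sub>m 1\<^sub>m N) *\<^sub>v v = c \<cdot>\<^sub>v v"
proof (rule eq_vecI)
  fix i assume "i < dim_vec (c \<cdot>\<^sub>v v)"
  then have i: "i < N" using v by simp
  have "((c \<cdot>\<^sub>m 1\<^sub>m N) *\<^sub>v v) $ i = (\<Sum>j\<in>{0..<N}. c * (if i = j then 1 else 0) * v $ j)"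
    using i v by (simp add: scalar_prod_def row_def)
  also have "\<dots> = (\<Sum>j\<in>{0..<N}. if i = j then c * v $ j else 0)" by (rule sum.cong) auto
  also have "\<dots> = c * v $ i" using i by (simp add: sum.delta)
  finally show "((c \<cdot>\<^sub>m 1\<^sub>m N) *\<^sub>v v) $ i = (c \<cdot>\<^sub>v v) $ i" using i v by simp
qed (use v in simp)

lemma Bv: "v \<in> carrier_vec N \<Longrightarrow> B *\<^sub>v v = A *\<^sub>v v + c \<cdot>\<^sub>v v"
  unfolding B_def using A by (simp add: add_mult_distrib_mat_vec[of _ N N] smult_one_mat_vec)

lemma tri:
  assumes w: "w \<in> carrier_vec N" and z: "\<forall>i\<in>J. (P *\<^sub>v w) $ i = 0" and t: "t < k"
  shows "w $ t = 0"
proof (rule ccontr)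
  assume nz: "w $ t \<noteq> 0"
  define T where "T = {t. t < k \<and> w $ t \<noteq> 0}"
  have finT: "finite T" unfolding T_def by simp
  have tT: "t \<in> T" using t nz unfolding T_def by simp
  define f where "f t = \<mu> (js ! t)" for t
  obtain v where v: "v \<in> f ` T" "\<not> (\<exists>x\<in>f ` T. x < v)"
    using ex_min_if_finite[of "f ` T"] finT tT by blast
  then obtain t0 where t0: "t0 \<in> T" "f t0 = v" by blast
  have min: "f t0 \<le> f t'" if "t' \<in> T" for t' using v t0 that by force
  have t0k: "t0 < k" and wt0: "w $ t0 \<noteq> 0" using t0 unfolding T_def by auto
  let ?i = "js ! t0"
  have iJ: "?i \<in> J" using js_in[OF t0k] .
  have others: "gv (js ! t') $ ?i * w $ t' = 0" if t': "t' < k" "t' \<noteq> t0" for t'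
  proof (cases "w $ t' = 0")
    case False
    then have t'T: "t' \<in> T" using t' unfolding T_def by simp
    show ?thesis
    proof (rule ccontr)
      assume "gv (js ! t') $ ?i * w $ t' \<noteq> 0"
      then have "gv (js ! t') $ ?i \<noteq> 0" by simp
      then have "?i = js ! t' \<or> \<mu> (js ! t') < \<mu> ?i" using gtri[OF js_in[OF t'(1)] iJ] by simp
      then show False
      proof
        assume "?i = js ! t'"
        then have "t0 = t'" using nth_eq_iff_index_eq[OF js(2)] js(1) t'(1) t0k by auto
        then show False using t' by simp
      next
        assume "\<mu> (js ! t') < \<mu> ?i"
        then show False using min[OF t'T] unfolding f_def by simp
      qed
    qed
  qed simp
  have "(P *\<^sub>v w) $ ?i = (\<Sum>t<k. gv (js ! t) $ ?i * w $ t)" by (rule PvJ[OF w iJ])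
  also have "\<dots> = gv (js ! t0) $ ?i * w $ t0 + (\<Sum>t\<in>{..<k} - {t0}. gv (js ! t) $ ?i * w $ t)"
    by (rule sum.remove) (use t0k in auto)
  also have "(\<Sum>t\<in>{..<k} - {t0}. gv (js ! t) $ ?i * w $ t) = 0"
    by (rule sum.neutral) (use others in auto)
  finally have "(P *\<^sub>v w) $ ?i = w $ t0" using gdiag[OF iJ] by simp
  then show False using z iJ wt0 by simp
qed

lemma Pinj:
  assumes w: "w \<in> carrier_vec N" and z: "P *\<^sub>v w = 0\<^sub>v N"
  shows "w = 0\<^sub>v N"
proof -
  have zi: "(P *\<^sub>v w) $ i = 0" if "i < N" for i using z that by simp
  have low: "w $ t = 0" if "t < k" for t
    by (rule tri[OF w _ that]) (use zi J in auto)
  have high: "w $ (k + r) = 0" if r: "r < N - k" for r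
  proof -
    have "(P *\<^sub>v w) $ (os ! r) = (\<Sum>t<k. gv (js ! t) $ (os ! r) * w $ t) + w $ (k + r)" by (rule PvO[OF w r])
    moreover have "(\<Sum>t<k. gv (js ! t) $ (os ! r) * w $ t) = 0" using low by simp
    moreover have "(P *\<^sub>v w) $ (os ! r) = 0" using zi os_in[OF r] by auto
    ultimately show ?thesis by simp
  qed
  show ?thesis
  proof (rule eq_vecI)
    fix i assume "i < dim_vec (0\<^sub>v N)"
    then have i: "i < N" by simp
    show "w $ i = 0\<^sub>v N $ i"
    proof (cases "i < k")
      case True then show ?thesis using low i by simp
    next
      case False
      then have "i = k + (i - k)" "i - k < N - k" using i by auto
      then show ?thesis using high[of "i - k"] i by simp
    qed
  qed (use w in simp)
qed

lemma detP: "det P \<noteq> 0"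
  using det_0_iff_vec_prod_zero[OF Pc] Pinj by blast

lemma Q_ex: "\<exists>Q. Q \<in> carrier_mat N N \<and> Q * P = 1\<^sub>m N \<and> P * Q = 1\<^sub>m N"
proof -
  have "P \<in> Units (ring_mat TYPE(real) N ())" by (rule det_non_zero_imp_unit[OF Pc detP])
  then show ?thesis unfolding Units_def ring_mat_def by auto
qed

definition "Q = (SOME Q. Q \<in> carrier_mat N N \<and> Q * P = 1\<^sub>m N \<and> P * Q = 1\<^sub>m N)"

lemma Q: "Q \<in> carrier_mat N N" "Q * P = 1\<^sub>m N" "P * Q = 1\<^sub>m N"
  using someI_ex[OF Q_ex] unfolding Q_def by auto

definition "M = Q * A * P"

lemma Mc: "M \<in> carrier_mat N N" unfolding M_def using Q A Pc by auto

lemma PM: "P * M = A * P"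
proof -
  have "P * M = P * ((Q * A) * P)" unfolding M_def ..
  also have "\<dots> = (P * (Q * A)) * P" by (rule assoc_mult_mat[symmetric, of _ N N _ N _ N]) (use Pc Q A in auto)
  also have "P * (Q * A) = (P * Q) * A" by (rule assoc_mult_mat[symmetric, of _ N N _ N _ N]) (use Pc Q A in auto)
  also have "(P * Q) * A = A" unfolding Q(3) using A by simp
  finally show ?thesis .
qed

lemma simM: "similar_mat A M"
proof (rule similar_matI)
  have "P * M * Q = A * P * Q" using PM by simp
  also have "\<dots> = A * (P * Q)" using A Pc Q by (simp add: assoc_mult_mat[of _ N N _ N _ N])
  also have "A * (P * Q) = A" unfolding Q(3) using A by simp
  finally show "A = P * M * Q" by simp
  show "{A, M, P, Q} \<subseteq> carrier_mat N N" using A Mc Pc Q by auto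
qed (use Q in auto)

lemma colP: assumes t: "t < k" shows "col P t = gv (js ! t)"
proof -
  have g: "gv (js ! t) \<in> carrier_vec N" using gv js_in t by simp
  show ?thesis by (rule eq_vecI) (use g t kN in \<open>auto simp: P_def\<close>)
qed

lemma Agv: "j \<in> J \<Longrightarrow> A *\<^sub>v gv j = (- c) \<cdot>\<^sub>v gv j"
proof -
  assume j: "j \<in> J"
  have eq: "A *\<^sub>v gv j + c \<cdot>\<^sub>v gv j = 0\<^sub>v N" using Bv[OF gv[OF j]] gvker[OF j] unfolding B_def by simp
  have e: "(A *\<^sub>v gv j) $ i + c * gv j $ i = 0" if "i < N" for i
    using arg_cong[OF eq, of "\<lambda>v. v $ i"] that gv[OF j] A by simp
  show ?thesis using gv[OF j] A e by (intro eq_vecI) (auto simp: add_eq_0_iff)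
qed

lemma colM:
  assumes t: "t < k" and i: "i < N"
  shows "M $$ (i, t) = (if i = t then - c else 0)"
proof -
  have tN: "t < N" using t kN by simp
  have AP: "A * P \<in> carrier_mat N N" using A Pc by simp
  have "col M t = col (Q * (A * P)) t" unfolding M_def using Q A Pc by simp
  also have "\<dots> = Q *\<^sub>v col (A * P) t" by (rule col_mult2[OF Q(1) AP tN])
  also have "col (A * P) t = A *\<^sub>v col P t" by (rule col_mult2[OF A Pc tN])
  also have "Q *\<^sub>v (A *\<^sub>v col P t) = Q *\<^sub>v (A *\<^sub>v gv (js ! t))" using colP[OF t] by simp
  also have "\<dots> = Q *\<^sub>v ((- c) \<cdot>\<^sub>v col P t)" using Agv[OF js_in[OF t]] colP[OF t] by simp
  also have "\<dots> = (- c) \<cdot>\<^sub>v (Q *\<^sub>v col P t)" using Q Pc tN by (simp add: mult_mat_vec[of _ N N])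
  also have "Q *\<^sub>v col P t = col (Q * P) t" by (rule col_mult2[symmetric, OF Q(1) Pc tN])
  also have "\<dots> = unit_vec N t" using Q tN by simp
  finally have "col M t = (- c) \<cdot>\<^sub>v unit_vec N t" .
  then have "col M t $ i = (- c) * unit_vec N t $ i" using i by simp
  then show ?thesis using Mc i tN by (simp add: unit_vec_def)
qed


lemma BP: "x \<in> carrier_vec N \<Longrightarrow> B *\<^sub>v (P *\<^sub>v x) = P *\<^sub>v (M *\<^sub>v x + c \<cdot>\<^sub>v x)"
proof -
  assume x: "x \<in> carrier_vec N"
  have Px: "P *\<^sub>v x \<in> carrier_vec N" using Pc x by simp
  have "B *\<^sub>v (P *\<^sub>v x) = A *\<^sub>v (P *\<^sub>v x) + c \<cdot>\<^sub>v (P *\<^sub>v x)" by (rule Bv[OF Px])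
  also have "A *\<^sub>v (P *\<^sub>v x) = (A * P) *\<^sub>v x" using A Pc x by simp
  also have "\<dots> = (P * M) *\<^sub>v x" using PM by simp
  also have "\<dots> = P *\<^sub>v (M *\<^sub>v x)" using Pc Mc x by simp
  also have "c \<cdot>\<^sub>v (P *\<^sub>v x) = P *\<^sub>v (c \<cdot>\<^sub>v x)" using Pc x by (simp add: mult_mat_vec[of _ N N])
  also have "P *\<^sub>v (M *\<^sub>v x) + P *\<^sub>v (c \<cdot>\<^sub>v x) = P *\<^sub>v (M *\<^sub>v x + c \<cdot>\<^sub>v x)"
    using Pc Mc x by (simp add: mult_add_distrib_mat_vec[of _ N N])
  finally show ?thesis .
qed

lemma low_ker:
  assumes y: "y \<in> carrier_vec N" and yz: "\<And>i. k \<le> i \<Longrightarrow> i < N \<Longrightarrow> y $ i = 0"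
  shows "M *\<^sub>v y + c \<cdot>\<^sub>v y = 0\<^sub>v N"
proof (rule eq_vecI)
  fix i assume "i < dim_vec (0\<^sub>v N)"
  then have i: "i < N" by simp
  have "(M *\<^sub>v y) $ i = (\<Sum>t\<in>{0..<N}. M $$ (i, t) * y $ t)"
    using Mc y i by (simp add: scalar_prod_def row_def)
  also have "\<dots> = (\<Sum>t<k. M $$ (i, t) * y $ t) + (\<Sum>r<N - k. M $$ (i, k + r) * y $ (k + r))"
    by (rule sum_split_at[OF kN])
  also have "(\<Sum>r<N - k. M $$ (i, k + r) * y $ (k + r)) = 0"
    by (rule sum.neutral) (use yz in auto)
  also have "(\<Sum>t<k. M $$ (i, t) * y $ t) = (\<Sum>t<k. if i = t then - c * y $ t else 0)"
    by (rule sum.cong) (use colM i in auto)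
  also have "\<dots> = (if i < k then - c * y $ i else 0)" by (simp add: sum.delta)
  finally have "(M *\<^sub>v y) $ i = (if i < k then - c * y $ i else 0)" by simp
  then show "(M *\<^sub>v y + c \<cdot>\<^sub>v y) $ i = 0\<^sub>v N $ i" using i y yz[of i] Mc by auto
qed (use Mc y in simp)

definition "M1 = mat k k (\<lambda>ij. M $$ ij)"
definition "M2 = mat k (N - k) (\<lambda>(i, j). M $$ (i, j + k))"
definition "M3 = mat (N - k) k (\<lambda>(i, j). M $$ (i + k, j))"
definition "M4 = mat (N - k) (N - k) (\<lambda>(i, j). M $$ (i + k, j + k))"

lemma sb: "split_block M k k = (M1, M2, M3, M4)"
  unfolding M1_def M2_def M3_def M4_def split_block_def Let_def using Mc by simp

lemma dims: "dim_row M = k + (N - k)" "dim_col M = k + (N - k)" using Mc kN by auto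

lemmas blocks = split_block[OF sb dims]

lemma M4_entry: "i < N - k \<Longrightarrow> j < N - k \<Longrightarrow> M4 $$ (i, j) = M $$ (i + k, j + k)"
  unfolding M4_def by simp

lemma M3_zero: "M3 = 0\<^sub>m (N - k) k"
proof -
  have "M3 $$ (i, j) = M $$ (i + k, j)" if "i < N - k" "j < k" for i j
    using that unfolding M3_def by simp
  then show ?thesis using blocks(3) colM by (intro eq_matI) auto
qed

lemma M1_entry: "i < k \<Longrightarrow> j < k \<Longrightarrow> M1 $$ (i, j) = (if i = j then - c else 0)"
proof -
  assume "i < k" "j < k"
  moreover have "M1 $$ (i, j) = M $$ (i, j)" using \<open>i < k\<close> \<open>j < k\<close> unfolding M1_def by simp
  ultimately show ?thesis using colM kN by auto
qed

lemma cp_M: "char_poly M = char_poly M1 * char_poly M4"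
proof -
  let ?cm = "\<lambda> A. [:0, 1:] \<cdot>\<^sub>m 1\<^sub>m (dim_row A) + map_mat (\<lambda>a. [:- a:]) A"
  let ?B2 = "map_mat (\<lambda>a. [:- a:]) M2"
  have c1: "M1 \<in> carrier_mat k k" and c2: "M2 \<in> carrier_mat k (N - k)" and c4: "M4 \<in> carrier_mat (N - k) (N - k)"
    using blocks by auto
  have MM: "M = four_block_mat M1 M2 (0\<^sub>m (N - k) k) M4" using blocks(5) M3_zero by simp
  have "char_poly M = det (?cm M)" unfolding char_poly_defs ..
  also have "?cm M = four_block_mat (?cm M1) ?B2 (0\<^sub>m (N - k) k) (?cm M4)"
    unfolding MM by (rule eq_matI) (insert c1 c2 c4, auto simp: one_poly_def)
  also have "det \<dots> = det (?cm M1) * det (?cm M4)"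
    by (rule det_four_block_mat_lower_left_zero) (insert c1 c2 c4, auto)
  also have "\<dots> = char_poly M1 * char_poly M4" unfolding char_poly_defs ..
  finally show ?thesis .
qed

lemma cp_M1: "char_poly M1 = [:c, 1:] ^ k"
proof -
  have c1: "M1 \<in> carrier_mat k k" using blocks by auto
  have ut: "upper_triangular M1" unfolding upper_triangular_def using c1 M1_entry by auto
  have d: "diag_mat M1 = replicate k (- c)"
    unfolding diag_mat_def using c1 M1_entry by (intro nth_equalityI) auto
  show ?thesis unfolding char_poly_upper_triangular[OF c1 ut] d by simp
qed

lemma no_eig: "\<not> eigenvalue M4 (- c)"
proof
  assume "eigenvalue M4 (- c)"
  then obtain v where ev: "eigenvector M4 v (- c)" unfolding eigenvalue_def by blast
  have c4: "M4 \<in> carrier_mat (N - k) (N - k)" using blocks by auto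
  have v: "v \<in> carrier_vec (N - k)" "v \<noteq> 0\<^sub>v (N - k)" "M4 *\<^sub>v v = (- c) \<cdot>\<^sub>v v"
    using ev c4 unfolding eigenvector_def by auto
  define u where "u = vec N (\<lambda>i. if i < k then 0 else v $ (i - k))"
  have u: "u \<in> carrier_vec N" unfolding u_def by simp
  have Mu: "(M *\<^sub>v u) $ i = - c * u $ i" if i: "k \<le> i" "i < N" for i
  proof -
    have "(M *\<^sub>v u) $ i = (\<Sum>t\<in>{0..<N}. M $$ (i, t) * u $ t)"
      using Mc u i by (simp add: scalar_prod_def row_def)
    also have "\<dots> = (\<Sum>t<k. M $$ (i, t) * u $ t) + (\<Sum>r<N - k. M $$ (i, k + r) * u $ (k + r))"
      by (rule sum_split_at[OF kN])
    also have "(\<Sum>t<k. M $$ (i, t) * u $ t) = 0" by (rule sum.neutral) (use kN in \<open>auto simp: u_def\<close>)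
    also have "(\<Sum>r<N - k. M $$ (i, k + r) * u $ (k + r)) = (\<Sum>r<N - k. M4 $$ (i - k, r) * v $ r)"
      by (rule sum.cong) (use i in \<open>auto simp: u_def M4_entry add.commute\<close>)
    also have "\<dots> = (M4 *\<^sub>v v) $ (i - k)" using c4 v(1) i by (simp add: scalar_prod_def row_def atLeast0LessThan)
    also have "\<dots> = - c * v $ (i - k)" using v i by simp
    finally show ?thesis using i by (simp add: u_def)
  qed
  define y where "y = M *\<^sub>v u + c \<cdot>\<^sub>v u"
  have y: "y \<in> carrier_vec N" unfolding y_def using Mc u by simp
  have yz: "y $ i = 0" if "k \<le> i" "i < N" for i
    using Mu[OF that] that u Mc unfolding y_def by simp
  have "B *\<^sub>v (B *\<^sub>v (P *\<^sub>v u)) = B *\<^sub>v (P *\<^sub>v y)" unfolding BP[OF u] y_def ..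
  also have "\<dots> = P *\<^sub>v (M *\<^sub>v y + c \<cdot>\<^sub>v y)" by (rule BP[OF y])
  also have "\<dots> = 0\<^sub>v N"
  proof -
    have "M *\<^sub>v y + c \<cdot>\<^sub>v y = 0\<^sub>v N" by (rule low_ker[OF y]) (use yz in auto)
    moreover have "P *\<^sub>v 0\<^sub>v N = 0\<^sub>v N" using Pc by (intro eq_vecI) (auto simp: scalar_prod_def)
    ultimately show ?thesis by simp
  qed
  finally have BB: "B *\<^sub>v (B *\<^sub>v (P *\<^sub>v u)) = 0\<^sub>v N" .
  define x where "x = B *\<^sub>v (P *\<^sub>v u)"
  have Pu: "P *\<^sub>v u \<in> carrier_vec N" using Pc u by simp
  have x: "x \<in> carrier_vec N" unfolding x_def using Bc Pu by simp
  have "x \<bullet> x = (transpose_mat B *\<^sub>v (P *\<^sub>v u)) \<bullet> x" unfolding x_def using sym unfolding B_def by simp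
  also have "\<dots> = (P *\<^sub>v u) \<bullet> (B *\<^sub>v x)" by (rule transpose_vec_mult_scalar[OF Bc x Pu])
  also have "\<dots> = 0" using BB Pu unfolding x_def by simp
  finally have "x = 0\<^sub>v N" using self_scalar_zero[OF x] by simp
  then have kerPu: "(A + c \<cdot>\<^sub>m 1\<^sub>m N) *\<^sub>v (P *\<^sub>v u) = 0\<^sub>v N" unfolding x_def B_def .
  have u0: "u $ t = 0" if "t < k" for t using that kN unfolding u_def by simp
  have "\<forall>j\<in>J. (P *\<^sub>v u) $ j = 0" using PvJ[OF u] u0 by simp
  then have "P *\<^sub>v u = 0\<^sub>v N" using ub[OF Pu kerPu] by simp
  then have "u = 0\<^sub>v N" by (rule Pinj[OF u])
  then have "v = 0\<^sub>v (N - k)"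
  proof -
    assume u0: "u = 0\<^sub>v N"
    have "v $ r = 0" if "r < N - k" for r
      using arg_cong[OF u0, of "\<lambda>w. w $ (k + r)"] that unfolding u_def by simp
    then show ?thesis using v(1) by (intro eq_vecI) auto
  qed
  then show False using v(2) by simp
qed

theorem order_result: "order (- c) (char_poly A) = card J"
proof -
  have c4: "M4 \<in> carrier_mat (N - k) (N - k)" using blocks by auto
  have cpA: "char_poly A = [:c, 1:] ^ k * char_poly M4"
    using char_poly_similar[OF simM] cp_M cp_M1 by simp
  have nz4: "poly (char_poly M4) (- c) \<noteq> 0" using no_eig eigenvalue_root_char_poly[OF c4] by simp
  then have cp4: "char_poly M4 \<noteq> 0" by auto
  have nzp: "[:c, 1:] ^ k \<noteq> (0 :: real poly)" by simp
  have "order (- c) (char_poly A) = order (- c) ([:c, 1:] ^ k) + order (- c) (char_poly M4)"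
    unfolding cpA by (rule order_mult) (use cp4 nzp in simp)
  also have "order (- c) ([:c, 1:] ^ k) = k" using order_power_n_n[of "- c" k] by simp
  also have "order (- c) (char_poly M4) = 0" by (rule order_0I[OF nz4])
  finally show ?thesis unfolding k_def by simp
qed

end




definition incl :: "nat \<Rightarrow> nat list \<Rightarrow> nat list \<times> nat \<Rightarrow> bool" where
  "incl m x c \<longleftrightarrow> (\<exists>k<m. x = pt (fst c) (snd c) k)"

definition CS :: "nat \<Rightarrow> nat \<Rightarrow> (nat list \<times> nat) set" where
  "CS m n = {(z, s). 1 \<le> s \<and> s \<le> n \<and> z \<in> Vs m (n - s)}"

lemma pt_of: "k < length x \<Longrightarrow> pt (x[k := x ! k - s]) s k = (if s \<le> x ! k then x else x[k := x ! k - s + s])"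
  unfolding pt_def by auto

lemma pt_of': "k < length x \<Longrightarrow> s \<le> x ! k \<Longrightarrow> pt (x[k := x ! k - s]) s k = x"
  using pt_of by simp

lemma pt_back: "k < length z \<Longrightarrow> (pt z s k)[k := pt z s k ! k - s] = z"
  unfolding pt_def by simp

lemma card_diag:
  assumes x: "x \<in> Vs m n"
  shows "card {c \<in> CS m n. incl m x c} = n"
proof -
  have xl: "length x = m" and xs: "sum_list x = n" using x unfolding Vs_def by auto
  define T where "T = (SIGMA k:{..<m}. {1..x ! k})"
  define f where "f = (\<lambda>(k, t). (x[k := x ! k - t], t))"
  have img: "{c \<in> CS m n. incl m x c} = f ` T"
  proof (rule Set.set_eqI)
    fix c
    show "c \<in> {c \<in> CS m n. incl m x c} \<longleftrightarrow> c \<in> f ` T"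
    proof
      assume "c \<in> {c \<in> CS m n. incl m x c}"
      then obtain z s k where c: "c = (z, s)" "1 \<le> s" "s \<le> n" "length z = m" "sum_list z = n - s" "k < m" "x = pt z s k"
        unfolding CS_def Vs_def incl_def by auto
      have "x ! k = z ! k + s" using c pt_nth[of k z s k] by simp
      then have "(k, s) \<in> T" using c unfolding T_def by auto
      moreover have "f (k, s) = c" unfolding f_def using c pt_back[of k z s] by simp
      ultimately show "c \<in> f ` T" by force
    next
      assume "c \<in> f ` T"
      then obtain k t where kt: "k < m" "1 \<le> t" "t \<le> x ! k" "c = (x[k := x ! k - t], t)"
        unfolding T_def f_def by auto
      have "x ! k \<le> n" using elem_le_sum_list[of k x] kt xl xs by simp
      then have "t \<le> n" using kt by simp
      moreover have "sum_list (x[k := x ! k - t]) = n - t" using sum_list_upd_sub[of k x t] kt xl xs by simp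
      moreover have "x = pt (x[k := x ! k - t]) t k" using pt_of'[of k x t] kt xl by simp
      ultimately show "c \<in> {c \<in> CS m n. incl m x c}" using kt xl unfolding CS_def Vs_def incl_def by auto
    qed
  qed
  have inj: "inj_on f T"
  proof (rule inj_onI)
    fix a b assume a: "a \<in> T" and b: "b \<in> T" and e: "f a = f b"
    obtain k t where a': "a = (k, t)" by (cases a)
    obtain k' t' where b': "b = (k', t')" by (cases b)
    have kt: "k < m" "1 \<le> t" "t \<le> x ! k" "k' < m" "1 \<le> t'" "t' \<le> x ! k'" using a b a' b' unfolding T_def by auto
    have tt: "t' = t" and ee: "x[k := x ! k - t] = x[k' := x ! k' - t]" using e a' b' unfolding f_def by auto
    have "k = k'"
    proof (rule ccontr)
      assume "k \<noteq> k'"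
      then have "x[k := x ! k - t] ! k = x[k' := x ! k' - t] ! k" using ee by simp
      then show False using \<open>k \<noteq> k'\<close> kt xl by simp
    qed
    then show "a = b" using a' b' tt by simp
  qed
  have "card {c \<in> CS m n. incl m x c} = card T" unfolding img by (rule card_image[OF inj])
  also have "\<dots> = (\<Sum>k<m. card {1..x ! k})" unfolding T_def by (rule card_SigmaI) auto
  also have "\<dots> = (\<Sum>k<m. x ! k)" by simp
  also have "\<dots> = n" using xl xs by (simp add: sum_list_sum_nth atLeast0LessThan)
  finally show ?thesis .
qed

lemma two_pts:
  assumes z: "length z = m" and k: "k < m" "k' < m" and s: "1 \<le> s"
    and x: "x = pt z s k" and y: "y = pt z s k'" and xy: "x \<noteq> y"
  shows "{j. j < m \<and> x ! j \<noteq> y ! j} = {k, k'}" "k \<noteq> k'" "y ! k < x ! k" "s = x ! k - y ! k"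
    "z = x[k := y ! k]"
proof -
  have xn: "x ! j = (if j = k then z ! k + s else z ! j)" for j using x pt_nth[of k z s j] k z by simp
  have yn: "y ! j = (if j = k' then z ! k' + s else z ! j)" for j using y pt_nth[of k' z s j] k z by simp
  show kk: "k \<noteq> k'" using x y xy by auto
  show "{j. j < m \<and> x ! j \<noteq> y ! j} = {k, k'}" using kk k s unfolding xn yn by auto
  show "y ! k < x ! k" using kk s unfolding xn yn by simp
  show "s = x ! k - y ! k" using kk s unfolding xn yn by simp
  show "z = x[k := y ! k]"
  proof (rule nth_equalityI)
    show "length z = length (x[k := y ! k])" using x z by simp
    fix i assume "i < length z"
    then have il: "i < length x" using x z by simp
    show "z ! i = x[k := y ! k] ! i"
    proof (cases "i = k")
      case True then show ?thesis using il kk yn[of k] by simp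
    next
      case False then show ?thesis using il xn[of i] by simp
    qed
  qed
qed


lemma sum_two_eq:
  assumes xl: "length x = m" and yl: "length y = m" and ab: "a < m" "b < m" "a \<noteq> b"
    and out: "\<And>j. j < m \<Longrightarrow> j \<noteq> a \<Longrightarrow> j \<noteq> b \<Longrightarrow> x ! j = y ! j"
    and sums: "sum_list x = (sum_list y :: nat)"
  shows "x ! a + x ! b = y ! a + y ! b"
proof -
  have split: "sum_list v = v ! a + v ! b + (\<Sum>j\<in>{..<m} - {a, b}. v ! j)" if "length v = m" for v :: "nat list"
  proof -
    have "sum_list v = (\<Sum>j<m. v ! j)" using that by (simp add: sum_list_sum_nth atLeast0LessThan)
    also have "\<dots> = v ! a + (\<Sum>j\<in>{..<m} - {a}. v ! j)" by (rule sum.remove) (use ab in auto)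
    also have "(\<Sum>j\<in>{..<m} - {a}. v ! j) = v ! b + (\<Sum>j\<in>{..<m} - {a} - {b}. v ! j)"
      by (rule sum.remove) (use ab in auto)
    finally show ?thesis by (simp add: Diff_insert2[symmetric] insert_commute)
  qed
  have "(\<Sum>j\<in>{..<m} - {a, b}. x ! j) = (\<Sum>j\<in>{..<m} - {a, b}. y ! j)"
    by (rule sum.cong) (use out in auto)
  then show ?thesis using split[OF xl] split[OF yl] sums by simp
qed

lemma card_off:
  assumes x: "x \<in> Vs m n" and y: "y \<in> Vs m n" and xy: "x \<noteq> y"
  shows "card {c \<in> CS m n. incl m x c \<and> incl m y c} = (if sr_adj m x y then 1 else 0)"
proof -
  let ?S = "{c \<in> CS m n. incl m x c \<and> incl m y c}"
  let ?D = "{j. j < m \<and> x ! j \<noteq> y ! j}"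
  have xl: "length x = m" and xs: "sum_list x = n" and yl: "length y = m" and ys: "sum_list y = n"
    using x y unfolding Vs_def by auto
  have mem: "\<exists>z s k k'. c = (z, s) \<and> length z = m \<and> 1 \<le> s \<and> k < m \<and> k' < m \<and> x = pt z s k \<and> y = pt z s k'"
    if "c \<in> ?S" for c
    using that unfolding CS_def Vs_def incl_def by force
  have adj_of: "sr_adj m x y" if c: "c \<in> ?S" for c
  proof -
    obtain z s k k' where zs: "c = (z, s)" "length z = m" "1 \<le> s" "k < m" "k' < m" "x = pt z s k" "y = pt z s k'"
      using mem[OF c] by blast
    note tp = two_pts[OF zs(2) zs(4) zs(5) zs(3) zs(6) zs(7) xy]
    show ?thesis unfolding sr_adj_def using tp(1,2) by simp
  qed
  have uniq: "c = c'" if c: "c \<in> ?S" and c': "c' \<in> ?S" for c c'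
  proof -
    obtain z s k k' where zs: "c = (z, s)" "length z = m" "1 \<le> s" "k < m" "k' < m" "x = pt z s k" "y = pt z s k'"
      using mem[OF c] by blast
    obtain z' s' q q' where zs': "c' = (z', s')" "length z' = m" "1 \<le> s'" "q < m" "q' < m" "x = pt z' s' q" "y = pt z' s' q'"
      using mem[OF c'] by blast
    note tp = two_pts[OF zs(2) zs(4) zs(5) zs(3) zs(6) zs(7) xy]
    note tp2 = two_pts[OF zs(2) zs(5) zs(4) zs(3) zs(7) zs(6) xy[symmetric]]
    note tp' = two_pts[OF zs'(2) zs'(4) zs'(5) zs'(3) zs'(6) zs'(7) xy]
    have "q \<in> {k, k'}" using tp(1) tp'(1) by blast
    moreover have "q \<noteq> k'" using tp2(3) tp'(3) by auto
    ultimately have qk: "q = k" by simp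
    show ?thesis using zs(1) zs'(1) tp(4,5) tp'(4,5) qk by simp
  qed
  show ?thesis
  proof (cases "sr_adj m x y")
    case False
    then have S0: "?S = {}" using adj_of by blast
    show ?thesis using False by (simp only: S0 card.empty if_False)
  next
    case True
    then obtain k1 k2 where D: "?D = {k1, k2}" "k1 \<noteq> k2" unfolding sr_adj_def card_2_iff by blast
    have k12: "k1 < m" "k2 < m" "x ! k1 \<noteq> y ! k1" "x ! k2 \<noteq> y ! k2" using D(1) by blast+
    have outD: "x ! j = y ! j" if "j < m" "j \<noteq> k1" "j \<noteq> k2" for j using D(1) that by blast
    have sid: "x ! k1 + x ! k2 = y ! k1 + y ! k2"
      by (rule sum_two_eq[OF xl yl k12(1,2) D(2) outD]) (use xs ys in auto)
    obtain ka kb where kab: "{ka, kb} = {k1, k2}" "ka \<noteq> kb" "y ! ka < x ! ka" "ka < m" "kb < m"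
      "x ! ka + x ! kb = y ! ka + y ! kb"
    proof (cases "y ! k1 < x ! k1")
      case True then show ?thesis using that[of k1 k2] D(2) k12 sid by auto
    next
      case False
      then have "y ! k2 < x ! k2" using k12(3) sid by auto
      then show ?thesis using that[of k2 k1] D(2) k12 sid by (auto simp: add.commute)
    qed
    define s where "s = x ! ka - y ! ka"
    define z where "z = x[ka := y ! ka]"
    have s1: "1 \<le> s" unfolding s_def using kab by simp
    have zl: "length z = m" unfolding z_def using xl by simp
    have zn: "z ! j = (if j = ka then y ! ka else x ! j)" if "j < m" for j unfolding z_def using that xl by simp
    have ptx: "pt z s ka = x"
    proof -
      have "pt z s ka = x[ka := y ! ka + s]" unfolding pt_def z_def using kab xl by simp
      also have "y ! ka + s = x ! ka" unfolding s_def using kab by simp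
      finally show ?thesis by simp
    qed
    have pty: "pt z s kb = y"
    proof (rule nth_equalityI)
      show "length (pt z s kb) = length y" using zl yl by simp
      fix j assume "j < length (pt z s kb)"
      then have j: "j < m" using zl by simp
      show "pt z s kb ! j = y ! j"
      proof (cases "j = kb")
        case True then show ?thesis using pt_nth[of kb z s j] zl kab zn[of kb] unfolding s_def by simp
      next
        case False
        have "pt z s kb ! j = z ! j" using pt_nth[of kb z s j] zl kab False by simp
        also have "\<dots> = y ! j"
        proof (cases "j = ka")
          case True then show ?thesis using zn[OF j] by simp
        next
          case False
          then have "j \<noteq> k1" "j \<noteq> k2" using kab(1) \<open>j \<noteq> kb\<close> by auto
          then show ?thesis using zn[OF j] outD[OF j] False by simp
        qed
        finally show ?thesis .
      qed
    qed
    have "x ! ka \<le> n" using elem_le_sum_list[of ka x] kab xl xs by simp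
    then have sn: "s \<le> n" unfolding s_def by simp
    have zsum: "sum_list z = n - s"
    proof -
      have "z = x[ka := x ! ka - s]" unfolding z_def s_def using kab by simp
      then show ?thesis using sum_list_upd_sub[of ka x s] kab xl xs unfolding s_def by simp
    qed
    have c0: "(z, s) \<in> ?S"
      unfolding CS_def Vs_def incl_def using s1 sn zl zsum ptx pty kab by force
    have "?S = {(z, s)}" using c0 uniq by blast
    then show ?thesis using True by simp
  qed
qed


definition csl :: "nat \<Rightarrow> nat \<Rightarrow> (nat list \<times> nat) list" where
  "csl m n = concat (map (\<lambda>s. map (\<lambda>z. (z, s)) (sr_vertex_list m (n - s))) [1..<Suc n])"

lemma csl_set: "set (csl m n) = CS m n"
  unfolding csl_def CS_def Vs_def set_vl[symmetric] by auto

lemma csl_distinct: "distinct (csl m n)"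
  unfolding csl_def by (rule distinct_concat_map) (auto simp: distinct_map distinct_vl inj_on_def)

definition Nm :: "nat \<Rightarrow> nat \<Rightarrow> real mat" where
  "Nm m n = mat (length (sr_vertex_list m n)) (length (csl m n))
     (\<lambda>(i, l). if incl m (sr_vertex_list m n ! i) (csl m n ! l) then 1 else 0)"

lemma card_nth_filter:
  assumes "distinct xs"
  shows "card {l. l < length xs \<and> Pr (xs ! l)} = card {c \<in> set xs. Pr c}"
proof -
  have "{c \<in> set xs. Pr c} = (\<lambda>l. xs ! l) ` {l. l < length xs \<and> Pr (xs ! l)}"
    by (auto simp: in_set_conv_nth)
  moreover have "inj_on (\<lambda>l. xs ! l) {l. l < length xs \<and> Pr (xs ! l)}"
    by (rule inj_on_nth[OF assms]) auto
  ultimately show ?thesis by (simp add: card_image)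
qed

lemma sum_indicator_card:
  fixes L :: nat
  shows "(\<Sum>l\<in>{0..<L}. if Pr l then 1 else 0 :: real) = real (card {l. l < L \<and> Pr l})"
proof -
  have "(\<Sum>l\<in>{0..<L}. if Pr l then 1 else 0 :: real) = (\<Sum>l\<in>{l \<in> {0..<L}. Pr l}. 1)"
    by (rule sum.inter_filter[symmetric]) simp
  also have "{l \<in> {0..<L}. Pr l} = {l. l < L \<and> Pr l}" by auto
  finally show ?thesis by simp
qed

lemma vs_in: "i < length (sr_vertex_list m n) \<Longrightarrow> sr_vertex_list m n ! i \<in> Vs m n"
  unfolding Vs_def using set_vl nth_mem by (metis (mono_tags, lifting) mem_Collect_eq)

lemma not_adj_self: "\<not> sr_adj m x x" unfolding sr_adj_def by simp

lemma gram: "sr_adj_matrix m n + real n \<cdot>\<^sub>m 1\<^sub>m (length (sr_vertex_list m n)) = Nm m n * transpose_mat (Nm m n)"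
proof (rule eq_matI)
  let ?vs = "sr_vertex_list m n"
  let ?L = "length (csl m n)"
  fix i j assume "i < dim_row (Nm m n * transpose_mat (Nm m n))" "j < dim_col (Nm m n * transpose_mat (Nm m n))"
  then have i: "i < length ?vs" and j: "j < length ?vs" unfolding Nm_def by auto
  have "(Nm m n * transpose_mat (Nm m n)) $$ (i, j) = (\<Sum>l\<in>{0..<?L}. Nm m n $$ (i, l) * Nm m n $$ (j, l))"
    using i j by (simp add: scalar_prod_def Nm_def row_def col_def)
  also have "\<dots> = (\<Sum>l\<in>{0..<?L}. if incl m (?vs ! i) (csl m n ! l) \<and> incl m (?vs ! j) (csl m n ! l) then 1 else 0)"
    by (rule sum.cong) (use i j in \<open>auto simp: Nm_def\<close>)
  also have "\<dots> = real (card {l. l < ?L \<and> incl m (?vs ! i) (csl m n ! l) \<and> incl m (?vs ! j) (csl m n ! l)})"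
    by (rule sum_indicator_card)
  also have "\<dots> = real (card {c \<in> CS m n. incl m (?vs ! i) c \<and> incl m (?vs ! j) c})"
    using card_nth_filter[OF csl_distinct, of m n "\<lambda>c. incl m (?vs ! i) c \<and> incl m (?vs ! j) c"]
    unfolding csl_set by simp
  also have "\<dots> = (sr_adj_matrix m n + real n \<cdot>\<^sub>m 1\<^sub>m (length ?vs)) $$ (i, j)"
  proof (cases "i = j")
    case True
    then show ?thesis using card_diag[OF vs_in[OF i]] i not_adj_self
      by (simp add: sr_adj_matrix_def Let_def)
  next
    case False
    then have "?vs ! i \<noteq> ?vs ! j" using i j distinct_vl nth_eq_iff_index_eq by metis
    then show ?thesis using card_off[OF vs_in[OF i] vs_in[OF j]] i j False
      by (simp add: sr_adj_matrix_def Let_def)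
  qed
  finally show "(sr_adj_matrix m n + real n \<cdot>\<^sub>m 1\<^sub>m (length ?vs)) $$ (i, j) = (Nm m n * transpose_mat (Nm m n)) $$ (i, j)"
    by simp
qed (auto simp: Nm_def sr_adj_matrix_def Let_def)


definition idx :: "'a list \<Rightarrow> 'a \<Rightarrow> nat" where
  "idx xs x = (THE i. i < length xs \<and> xs ! i = x)"

lemma idx_nth: "distinct xs \<Longrightarrow> i < length xs \<Longrightarrow> idx xs (xs ! i) = i"
  unfolding idx_def by (rule the_equality) (auto simp: nth_eq_iff_index_eq)

lemma idx_in: "distinct xs \<Longrightarrow> x \<in> set xs \<Longrightarrow> idx xs x < length xs \<and> xs ! idx xs x = x"
  by (metis idx_nth in_set_conv_nth)

lemma pt_Vs: "(z, s) \<in> CS m n \<Longrightarrow> k < m \<Longrightarrow> pt z s k \<in> Vs m n"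
  unfolding CS_def Vs_def by (auto simp: pt_sum)

lemma pt_inj: "length z = m \<Longrightarrow> 1 \<le> s \<Longrightarrow> k < m \<Longrightarrow> k' < m \<Longrightarrow> pt z s k = pt z s k' \<Longrightarrow> k = k'"
proof (rule ccontr)
  assume a: "length z = m" "1 \<le> s" "k < m" "k' < m" "pt z s k = pt z s k'" "k \<noteq> k'"
  then have "pt z s k ! k = pt z s k' ! k" by simp
  then show False using a pt_nth[of k z s k] pt_nth[of k' z s k] by simp
qed

lemma sum_incl:
  assumes c: "(z, s) \<in> CS m n"
  shows "(\<Sum>i\<in>{0..<length (sr_vertex_list m n)}. if incl m (sr_vertex_list m n ! i) (z, s) then h i else 0)
    = (\<Sum>k<m. h (idx (sr_vertex_list m n) (pt z s k)))"
proof -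
  let ?vs = "sr_vertex_list m n"
  have zs: "length z = m" "1 \<le> s" using c unfolding CS_def Vs_def by auto
  have ptin: "pt z s k \<in> set ?vs" if "k < m" for k using pt_Vs[OF c that] set_vl unfolding Vs_def by simp
  let ?g = "\<lambda>k. idx ?vs (pt z s k)"
  have "(\<Sum>i\<in>{0..<length ?vs}. if incl m (?vs ! i) (z, s) then h i else 0) = (\<Sum>i\<in>{i \<in> {0..<length ?vs}. incl m (?vs ! i) (z, s)}. h i)"
    by (rule sum.inter_filter[symmetric]) simp
  also have "{i \<in> {0..<length ?vs}. incl m (?vs ! i) (z, s)} = ?g ` {..<m}"
  proof (rule Set.set_eqI)
    fix i
    show "i \<in> {i \<in> {0..<length ?vs}. incl m (?vs ! i) (z, s)} \<longleftrightarrow> i \<in> ?g ` {..<m}"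
    proof
      assume "i \<in> {i \<in> {0..<length ?vs}. incl m (?vs ! i) (z, s)}"
      then obtain k where k: "k < m" "?vs ! i = pt z s k" "i < length ?vs" unfolding incl_def by auto
      have "i = ?g k" using k idx_nth[OF distinct_vl] by metis
      then show "i \<in> ?g ` {..<m}" using k by blast
    next
      assume "i \<in> ?g ` {..<m}"
      then obtain k where k: "k < m" "i = ?g k" by blast
      then have "i < length ?vs" "?vs ! i = pt z s k" using ptin[OF k(1)] idx_in[OF distinct_vl] by auto
      then show "i \<in> {i \<in> {0..<length ?vs}. incl m (?vs ! i) (z, s)}" using k unfolding incl_def by auto
    qed
  qed
  also have "(\<Sum>i\<in>?g ` {..<m}. h i) = (\<Sum>k<m. h (?g k))"
  proof -
    have inj: "inj_on ?g {..<m}"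
    proof (rule inj_onI)
      fix a b assume a: "a \<in> {..<m}" and b: "b \<in> {..<m}" and e: "?g a = ?g b"
      have "pt z s a = pt z s b" using e ptin a b idx_in[OF distinct_vl] by (metis lessThan_iff)
      then show "a = b" using pt_inj zs a b by auto
    qed
    show ?thesis by (subst sum.reindex[OF inj]) (simp add: comp_def)
  qed
  finally show ?thesis .
qed

lemma NmT_entry:
  assumes w: "w \<in> carrier_vec (length (sr_vertex_list m n))" and l: "l < length (csl m n)" and c: "csl m n ! l = (z, s)"
  shows "(transpose_mat (Nm m n) *\<^sub>v w) $ l = (\<Sum>k<m. w $ idx (sr_vertex_list m n) (pt z s k))"
proof -
  let ?vs = "sr_vertex_list m n"
  have cs: "(z, s) \<in> CS m n" using c l csl_set nth_mem by metis
  have "(transpose_mat (Nm m n) *\<^sub>v w) $ l = (\<Sum>i\<in>{0..<length ?vs}. Nm m n $$ (i, l) * w $ i)"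
    using w l by (simp add: scalar_prod_def Nm_def row_def)
  also have "\<dots> = (\<Sum>i\<in>{0..<length ?vs}. if incl m (?vs ! i) (z, s) then w $ i else 0)"
    by (rule sum.cong) (use l c in \<open>auto simp: Nm_def\<close>)
  also have "\<dots> = (\<Sum>k<m. w $ idx ?vs (pt z s k))" by (rule sum_incl[OF cs])
  finally show ?thesis .
qed

lemma Nm_carrier: "Nm m n \<in> carrier_mat (length (sr_vertex_list m n)) (length (csl m n))"
  unfolding Nm_def by simp

lemma A_carrier: "sr_adj_matrix m n \<in> carrier_mat (length (sr_vertex_list m n)) (length (sr_vertex_list m n))"
  unfolding sr_adj_matrix_def Let_def by simp

definition fv :: "nat \<Rightarrow> nat \<Rightarrow> (nat list \<Rightarrow> real) \<Rightarrow> real vec" where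
  "fv m n f = vec (length (sr_vertex_list m n)) (\<lambda>i. f (sr_vertex_list m n ! i))"

lemma KER1:
  assumes f: "kcons m n f"
  shows "(sr_adj_matrix m n + real n \<cdot>\<^sub>m 1\<^sub>m (length (sr_vertex_list m n))) *\<^sub>v fv m n f = 0\<^sub>v (length (sr_vertex_list m n))"
proof -
  let ?vs = "sr_vertex_list m n"
  have fvc: "fv m n f \<in> carrier_vec (length ?vs)" unfolding fv_def by simp
  have z: "transpose_mat (Nm m n) *\<^sub>v fv m n f = 0\<^sub>v (length (csl m n))"
  proof (rule eq_vecI)
    fix l assume "l < dim_vec (0\<^sub>v (length (csl m n)))"
    then have l: "l < length (csl m n)" by simp
    obtain z s where c: "csl m n ! l = (z, s)" by (cases "csl m n ! l")
    have cs: "(z, s) \<in> CS m n" using c l csl_set nth_mem by metis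
    have "(transpose_mat (Nm m n) *\<^sub>v fv m n f) $ l = (\<Sum>k<m. fv m n f $ idx ?vs (pt z s k))"
      by (rule NmT_entry[OF fvc l c])
    also have "\<dots> = (\<Sum>k<m. f (pt z s k))"
    proof (rule sum.cong)
      fix k assume "k \<in> {..<m}"
      then have "pt z s k \<in> set ?vs" using pt_Vs[OF cs] set_vl unfolding Vs_def by simp
      then have "idx ?vs (pt z s k) < length ?vs" "?vs ! idx ?vs (pt z s k) = pt z s k"
        using idx_in[OF distinct_vl] by auto
      then show "fv m n f $ idx ?vs (pt z s k) = f (pt z s k)" unfolding fv_def by simp
    qed simp
    also have "\<dots> = 0" using f cs unfolding kcons_def CS_def Vs_def by auto
    finally show "(transpose_mat (Nm m n) *\<^sub>v fv m n f) $ l = 0\<^sub>v (length (csl m n)) $ l" using l by simp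
  qed (simp add: Nm_def)
  have "(sr_adj_matrix m n + real n \<cdot>\<^sub>m 1\<^sub>m (length ?vs)) *\<^sub>v fv m n f = (Nm m n * transpose_mat (Nm m n)) *\<^sub>v fv m n f"
    unfolding gram ..
  also have "\<dots> = Nm m n *\<^sub>v (transpose_mat (Nm m n) *\<^sub>v fv m n f)"
    by (rule assoc_mult_mat_vec) (use Nm_carrier[of m n] fvc in auto)
  also have "\<dots> = 0\<^sub>v (length ?vs)" unfolding z using Nm_carrier[of m n] by (intro eq_vecI) (auto simp: scalar_prod_def)
  finally show ?thesis .
qed

lemma KER2:
  assumes w: "w \<in> carrier_vec (length (sr_vertex_list m n))"
    and k: "(sr_adj_matrix m n + real n \<cdot>\<^sub>m 1\<^sub>m (length (sr_vertex_list m n))) *\<^sub>v w = 0\<^sub>v (length (sr_vertex_list m n))"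
  shows "kcons m n (\<lambda>x. w $ idx (sr_vertex_list m n) x)"
proof -
  let ?vs = "sr_vertex_list m n"
  let ?T = "transpose_mat (Nm m n)"
  define u where "u = ?T *\<^sub>v w"
  have u: "u \<in> carrier_vec (length (csl m n))" unfolding u_def
    by (rule mult_mat_vec_carrier) (use Nm_carrier[of m n] w in auto)
  have Nu: "Nm m n *\<^sub>v u = 0\<^sub>v (length ?vs)"
  proof -
    have "Nm m n *\<^sub>v u = (Nm m n * ?T) *\<^sub>v w" unfolding u_def
      by (rule assoc_mult_mat_vec[symmetric]) (use Nm_carrier[of m n] w in auto)
    also have "\<dots> = 0\<^sub>v (length ?vs)" using k unfolding gram .
    finally show ?thesis .
  qed
  have "u \<bullet> u = w \<bullet> (Nm m n *\<^sub>v u)" unfolding u_def by (rule transpose_vec_mult_scalar[OF Nm_carrier _ w]) (use u u_def in simp)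
  also have "\<dots> = 0" using Nu w by simp
  finally have u0: "u = 0\<^sub>v (length (csl m n))" using self_scalar_zero[OF u] by simp
  show ?thesis unfolding kcons_def
  proof (intro allI impI)
    fix z s assume "1 \<le> s" "s \<le> n" "length z = m" "sum_list z = n - s"
    then have "(z, s) \<in> CS m n" unfolding CS_def Vs_def by auto
    then obtain l where l: "l < length (csl m n)" "csl m n ! l = (z, s)" unfolding csl_set[symmetric] in_set_conv_nth by blast
    have "u $ l = (\<Sum>k<m. w $ idx ?vs (pt z s k))" unfolding u_def by (rule NmT_entry[OF w l])
    then show "(\<Sum>k<m. w $ idx ?vs (pt z s k)) = 0" using u0 l by simp
  qed
qed




theorem main_order: "order (- real n) (char_poly (sr_adj_matrix m n)) = card (art m n)"
proof -
  let ?vs = "sr_vertex_list m n"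
  let ?NV = "length ?vs"
  let ?A = "sr_adj_matrix m n"
  define J where "J = {i. i < ?NV \<and> ?vs ! i \<in> art m n}"
  define gv where "gv i = fv m n (gvec m (?vs ! i))" for i
  define \<mu> where "\<mu> i = mu (Suc n) (?vs ! i)" for i
  have dv: "distinct ?vs" by (rule distinct_vl)
  interpret algsetup ?A "real n" ?NV J gv \<mu>
  proof (unfold_locales)
    show "?A \<in> carrier_mat ?NV ?NV" by (rule A_carrier)
    show "transpose_mat (?A + real n \<cdot>\<^sub>m 1\<^sub>m ?NV) = ?A + real n \<cdot>\<^sub>m 1\<^sub>m ?NV"
      unfolding gram using Nm_carrier[of m n] by (simp add: transpose_mult[of _ ?NV "length (csl m n)" _ ?NV])
    show "J \<subseteq> {..<?NV}" unfolding J_def by auto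
    show "gv j \<in> carrier_vec ?NV" for j unfolding gv_def fv_def by simp
    show "(?A + real n \<cdot>\<^sub>m 1\<^sub>m ?NV) *\<^sub>v gv j = 0\<^sub>v ?NV" if "j \<in> J" for j
      unfolding gv_def by (rule KER1, rule gvec_cons) (use that in \<open>auto simp: J_def\<close>)
    show "gv j $ j = 1" if "j \<in> J" for j using that unfolding gv_def fv_def J_def by (simp add: gvec_self)
    show "j' = j \<or> \<mu> j < \<mu> j'" if j: "j \<in> J" and j': "j' \<in> J" and g: "gv j $ j' \<noteq> 0" for j j'
    proof -
      have jl: "j < ?NV" "j' < ?NV" using j j' unfolding J_def by auto
      have "gvec m (?vs ! j) (?vs ! j') \<noteq> 0" using g jl unfolding gv_def fv_def by simp
      moreover have "?vs ! j \<in> Vs m n" "length (?vs ! j') = m" using vs_in[OF jl(1)] vs_in[OF jl(2)] unfolding Vs_def by auto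
      ultimately have "?vs ! j' = ?vs ! j \<or> mu (Suc n) (?vs ! j) < mu (Suc n) (?vs ! j')"
        using gvec_tri by blast
      then show ?thesis unfolding \<mu>_def using jl dv nth_eq_iff_index_eq by metis
    qed
    show "w = 0\<^sub>v ?NV" if w: "w \<in> carrier_vec ?NV" and k: "(?A + real n \<cdot>\<^sub>m 1\<^sub>m ?NV) *\<^sub>v w = 0\<^sub>v ?NV"
      and z: "\<forall>j\<in>J. w $ j = 0" for w
    proof -
      define f where "f x = w $ idx ?vs x" for x
      have f: "kcons m n f" unfolding f_def by (rule KER2[OF w k])
      have fa: "f a = 0" if a: "a \<in> art m n" for a
      proof -
        have "a \<in> set ?vs" using a art_sub by blast
        then have "idx ?vs a < ?NV" "?vs ! idx ?vs a = a" using idx_in[OF dv] by auto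
        then have "idx ?vs a \<in> J" using a unfolding J_def by simp
        then show ?thesis using z unfolding f_def by simp
      qed
      have "w $ i = 0" if i: "i < ?NV" for i
      proof -
        have "f (?vs ! i) = 0" by (rule K1[OF f fa vs_in[OF i]])
        then show ?thesis unfolding f_def using idx_nth[OF dv i] by simp
      qed
      then show ?thesis using w by (intro eq_vecI) auto
    qed
  qed
  have "order (- real n) (char_poly ?A) = card J" by (rule order_result)
  also have "card J = card (art m n)"
  proof -
    have "art m n = (\<lambda>i. ?vs ! i) ` J"
    proof (rule Set.set_eqI)
      fix a
      show "a \<in> art m n \<longleftrightarrow> a \<in> (\<lambda>i. ?vs ! i) ` J"
      proof
        assume a: "a \<in> art m n"
        then have "a \<in> set ?vs" using art_sub by blast
        then obtain i where "i < ?NV" "?vs ! i = a" by (auto simp: in_set_conv_nth)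
        then show "a \<in> (\<lambda>i. ?vs ! i) ` J" using a unfolding J_def by auto
      qed (auto simp: J_def)
    qed
    moreover have "inj_on (\<lambda>i. ?vs ! i) J" by (rule inj_on_nth[OF dv]) (auto simp: J_def)
    ultimately show ?thesis by (simp add: card_image)
  qed
  finally show ?thesis .
qed

theorem proposition4:
  fixes m n :: nat
  assumes "m \<ge> 1"
  shows "eig_mult (sr_adj_matrix m n) (- real n)
           = card {p. p permutes {..<m} \<and> inversions m p = n}
       \<and> card {p. p permutes {..<m} \<and> inversions m p = n}
           = coeff (\<Prod>i\<in>{2..m}. \<Sum>j<i. monom (1::nat) j) n"
proof
  have "card {p. p permutes {..<m} \<and> inversions m p = n} = card (art m n)"
    using card_perms_art[of m n] unfolding perms_def .
  then show "eig_mult (sr_adj_matrix m n) (- real n) = card {p. p permutes {..<m} \<and> inversions m p = n}"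
    unfolding eig_mult_def main_order by simp
  show "card {p. p permutes {..<m} \<and> inversions m p = n} = coeff (\<Prod>i\<in>{2..m}. \<Sum>j<i. monom (1::nat) j) n"
    using card_perms_art[of m n] coeff_PP[of m n] unfolding perms_def PP_def by simp
qed


end
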